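(* Let $X,Y$ be template graphs with $O(X)=O(Y)$, let $G$ be a cubic graph, $\varphi$ an isomorphism from $c(X)$ onto an induced subgraph $R'$ of $G$ and $\psi$ as in the definition of transformations, and let $H=G[X\to Y]$ be the resulting extension. Suppose $G$ has a 3-decomposition $(T,C,M)$ such that the restriction $T_X$ of $T$ to $X$ is naïvely extendable to $Y$. Then $H$ has a 3-decomposition.
   Context: A 3-decomposition of a graph is a partition of its edge set into the edge sets of a spanning tree, a (possibly empty) 2-regular subgraph, and a (possibly empty) matching. A template graph is a graph $X$ whose vertex set is partitioned into inner vertices $I(X)$ of degree 3 and outer vertices $O(X)$ of degree 1; its core is $c(X)=X-O(X)$. Given template graphs $X,Y$ with $O(X)=O(Y)$, a cubic graph $G$ and an isomorphism $\varphi$ from $c(X)$ onto an induced subgraph $R'$ of $G$, fix $\psi\colon O(X)\to V(G)\setminus V(R')$ such that $vw\mapsto\varphi(v)\psi(w)$ ($vw\in E(X)$, $v\in I(X)$, $w\in O(X)$) is a bijection onto the edges of $G$ between $R'$ and $G-V(R')$; then $G[X\to Y]=(G-V(R'))\cup c(Y)+\{v\psi(w):vw\in E(Y),w\in O(Y)\}$. Via $\varphi,\psi$ each edge of $X$ corresponds to an edge of $G$; the restriction of $T$ to $X$ is the spanning subgraph of $X$ consisting of the edges of $X$ whose corresponding edges lie in $T$. A spanning forest $T_X$ of $X$ is 3-consistent if every component of $T_X$ contains an outer vertex and every component of $X-E(T_X)$ is a single vertex, a single edge, a cycle, or a path joining two outer vertices. For an outer vertex $v$ with incident edge $e$ set $f(v)=\mathtt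 t$ if $e\in E(T_X)$, $f(v)=\mathtt m$ if $e$ alone forms a component of $X-E(T_X)$, and $f(v)=\mathtt c$ otherwise; $T_X$ realises this assignment $f$. $T_X$ is naïvely extendable to $Y$ if some 3-consistent spanning forest $T_Y$ of $Y$ realises the same assignment and any two outer vertices are in the same component of $T_X$ iff they are in the same component of $T_Y$. *)

theory Defs
  imports Main
begin

text \<open>Finite loopless multigraphs with explicit edge identities.\<close>

record ('v, 'e) mgraph =
  verts :: "'v set"
  edges :: "'e set"
  ends  :: "'e \<Rightarrow> 'v set"

definition wf_graph :: "('v, 'e) mgraph \<Rightarrow> bool" where
  "wf_graph G \<longleftrightarrow> finite (verts G) \<and> finite (edges G) \<and>
     (\<forall>e \<in> edges G. ends G e \<subseteq> verts G \<and> card (ends G e) = 2)"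

definition degF :: "('v, 'e) mgraph \<Rightarrow> 'e set \<Rightarrow> 'v \<Rightarrow> nat" where
  "degF G F v = card {e \<in> F. v \<in> ends G e}"

definition deg :: "('v, 'e) mgraph \<Rightarrow> 'v \<Rightarrow> nat" where
  "deg G v = degF G (edges G) v"

definition cubic :: "('v, 'e) mgraph \<Rightarrow> bool" where
  "cubic G \<longleftrightarrow> wf_graph G \<and> (\<forall>v \<in> verts G. deg G v = 3)"

definition conn :: "('v, 'e) mgraph \<Rightarrow> 'e set \<Rightarrow> 'v \<Rightarrow> 'v \<Rightarrow> bool" where
  "conn G F x y \<longleftrightarrow> (\<lambda>a b. \<exists>e \<in> F. ends G e = {a, b})\<^sup>*\<^sup>* x y"

definition touched :: "('v, 'e) mgraph \<Rightarrow> 'e set \<Rightarrow> 'v set" where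
  "touched G S = \<Union> (ends G ` S)"

definition cycle_edges :: "('v, 'e) mgraph \<Rightarrow> 'e set \<Rightarrow> bool" where
  "cycle_edges G S \<longleftrightarrow> S \<noteq> {} \<and> S \<subseteq> edges G \<and>
     (\<forall>v \<in> touched G S. degF G S v = 2) \<and>
     (\<forall>x \<in> touched G S. \<forall>y \<in> touched G S. conn G S x y)"

definition acyclic_edges :: "('v, 'e) mgraph \<Rightarrow> 'e set \<Rightarrow> bool" where
  "acyclic_edges G F \<longleftrightarrow> \<not> (\<exists>S \<subseteq> F. cycle_edges G S)"

definition spanning_tree :: "('v, 'e) mgraph \<Rightarrow> 'e set \<Rightarrow> bool" where
  "spanning_tree G T \<longleftrightarrow> T \<subseteq> edges G \<and> acyclic_edges G T \<and>
     (\<forall>x \<in> verts G. \<forall>y \<in> verts G. conn G T x y)"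

definition two_regular :: "('v, 'e) mgraph \<Rightarrow> 'e set \<Rightarrow> bool" where
  "two_regular G C \<longleftrightarrow> C \<subseteq> edges G \<and> (\<forall>v \<in> verts G. degF G C v = 0 \<or> degF G C v = 2)"

definition matching :: "('v, 'e) mgraph \<Rightarrow> 'e set \<Rightarrow> bool" where
  "matching G M \<longleftrightarrow> M \<subseteq> edges G \<and> (\<forall>v \<in> verts G. degF G M v \<le> 1)"

definition three_decomp :: "('v, 'e) mgraph \<Rightarrow> 'e set \<Rightarrow> 'e set \<Rightarrow> 'e set \<Rightarrow> bool" where
  "three_decomp G T C M \<longleftrightarrow> T \<union> C \<union> M = edges G \<and>
     T \<inter> C = {} \<and> T \<inter> M = {} \<and> C \<inter> M = {} \<and>
     spanning_tree G T \<and> two_regular G C \<and> matching G M"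

text \<open>We also require that no edge joins two outer vertices (implicit in the paper,
  since every edge of X must correspond to an edge of G).\<close>
definition template :: "('w, 'x) mgraph \<Rightarrow> 'w set \<Rightarrow> bool" where
  "template X Out \<longleftrightarrow> wf_graph X \<and> Out \<subseteq> verts X \<and>
     (\<forall>v \<in> verts X - Out. deg X v = 3) \<and> (\<forall>v \<in> Out. deg X v = 1) \<and>
     (\<forall>e \<in> edges X. \<not> ends X e \<subseteq> Out)"

text \<open>f combines phi (on inner vertices) and psi (on outer vertices); chi is the
  induced correspondence of edges of X with the edges of G incident with R' = f ` I(X).
  Core edges are mapped bijectively onto the edges of G inside R' (so R' is induced and
  phi is an isomorphism), edges at outer vertices bijectively onto the edges between R'
  and G - V(R').\<close>
definition embedding :: "('v, 'e) mgraph \<Rightarrow> ('w, 'x) mgraph \<Rightarrow> 'w set \<Rightarrow>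
     ('w \<Rightarrow> 'v) \<Rightarrow> ('x \<Rightarrow> 'e) \<Rightarrow> bool" where
  "embedding G X Out f \<chi> \<longleftrightarrow>
     inj_on f (verts X - Out) \<and> f ` (verts X - Out) \<subseteq> verts G \<and>
     f ` Out \<subseteq> verts G - f ` (verts X - Out) \<and>
     bij_betw \<chi> (edges X) {e \<in> edges G. ends G e \<inter> f ` (verts X - Out) \<noteq> {}} \<and>
     (\<forall>e \<in> edges X. ends G (\<chi> e) = f ` ends X e)"

definition transform :: "('v, 'e) mgraph \<Rightarrow> ('w, 'x) mgraph \<Rightarrow> ('w, 'y) mgraph \<Rightarrow> 'w set \<Rightarrow>
     ('w \<Rightarrow> 'v) \<Rightarrow> ('x \<Rightarrow> 'e) \<Rightarrow> ('v + 'w, 'e + 'y) mgraph" where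
  "transform G X Y Out f \<chi> =
     \<lparr> verts = Inl ` (verts G - f ` (verts X - Out)) \<union> Inr ` (verts Y - Out),
       edges = Inl ` (edges G - \<chi> ` edges X) \<union> Inr ` edges Y,
       ends = (\<lambda>e. case e of
                 Inl e' \<Rightarrow> Inl ` ends G e'
               | Inr e' \<Rightarrow> (\<lambda>w. if w \<in> Out then Inl (f w) else Inr w) ` ends Y e') \<rparr>"

definition restrict_to :: "('w, 'x) mgraph \<Rightarrow> ('x \<Rightarrow> 'e) \<Rightarrow> 'e set \<Rightarrow> 'x set" where
  "restrict_to X \<chi> T = {e \<in> edges X. \<chi> e \<in> T}"

definition comp_verts :: "('v, 'e) mgraph \<Rightarrow> 'e set \<Rightarrow> 'v \<Rightarrow> 'v set" where
  "comp_verts G F v = {u \<in> verts G. conn G F v u}"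

definition comp_edges :: "('v, 'e) mgraph \<Rightarrow> 'e set \<Rightarrow> 'v \<Rightarrow> 'e set" where
  "comp_edges G F v = {e \<in> F. ends G e \<subseteq> comp_verts G F v}"

text \<open>A component (vertex set K, edge set S) is a path joining two outer vertices:
  nonempty, acyclic (it is connected), maximum degree 2, and its ends (the degree-1
  vertices) are outer.\<close>
definition outer_path :: "('v, 'e) mgraph \<Rightarrow> 'v set \<Rightarrow> 'v set \<Rightarrow> 'e set \<Rightarrow> bool" where
  "outer_path G Out K S \<longleftrightarrow> S \<noteq> {} \<and> acyclic_edges G S \<and>
     (\<forall>u \<in> K. degF G S u \<le> 2) \<and> (\<forall>u \<in> K. degF G S u = 1 \<longrightarrow> u \<in> Out)"

definition three_consistent :: "('w, 'x) mgraph \<Rightarrow> 'w set \<Rightarrow> 'x set \<Rightarrow> bool" where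
  "three_consistent X Out TX \<longleftrightarrow>
     TX \<subseteq> edges X \<and> acyclic_edges X TX \<and>
     (\<forall>v \<in> verts X. \<exists>u \<in> Out. conn X TX v u) \<and>
     (\<forall>v \<in> verts X.
        let K = comp_verts X (edges X - TX) v; S = comp_edges X (edges X - TX) v in
        S = {} \<or> card S = 1 \<or> cycle_edges X S \<or> outer_path X Out K S)"

datatype label = LabT | LabM | LabC

definition out_edge :: "('w, 'x) mgraph \<Rightarrow> 'w \<Rightarrow> 'x" where
  "out_edge X v = (THE e. e \<in> edges X \<and> v \<in> ends X e)"

definition label_of :: "('w, 'x) mgraph \<Rightarrow> 'x set \<Rightarrow> 'w \<Rightarrow> label" where
  "label_of X TX v =
     (let e = out_edge X v in
      if e \<in> TX then LabT
      else if comp_edges X (edges X - TX) v = {e} then LabM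
      else LabC)"

definition naively_extendable :: "('w, 'x) mgraph \<Rightarrow> ('w, 'y) mgraph \<Rightarrow> 'w set \<Rightarrow> 'x set \<Rightarrow> bool" where
  "naively_extendable X Y Out TX \<longleftrightarrow> three_consistent X Out TX \<and>
     (\<exists>TY. three_consistent Y Out TY \<and>
        (\<forall>v \<in> Out. label_of Y TY v = label_of X TX v) \<and>
        (\<forall>v \<in> Out. \<forall>w \<in> Out. conn X TX v w \<longleftrightarrow> conn Y TY v w))"

end

theory Submission
  imports Defs "HOL-Library.Transitive_Closure_Table"
begin


definition adj :: "('v, 'e) mgraph \<Rightarrow> 'e set \<Rightarrow> 'v \<Rightarrow> 'v \<Rightarrow> bool" where
  "adj G F = (\<lambda>a b. \<exists>e \<in> F. ends G e = {a, b})"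

lemma conn_adj: "conn G F x y \<longleftrightarrow> (adj G F)\<^sup>*\<^sup>* x y"
  unfolding conn_def adj_def by simp

lemma conn_refl[simp]: "conn G F x x"
  unfolding conn_def by simp

lemma adj_sym: "adj G F x y \<Longrightarrow> adj G F y x"
  unfolding adj_def by (auto simp: insert_commute)

lemma conn_sym: assumes "conn G F x y" shows "conn G F y x"
proof -
  have "(adj G F)\<^sup>*\<^sup>* x y" using assms conn_adj by metis
  then have "(adj G F)\<^sup>*\<^sup>* y x"
    by (induction rule: rtranclp_induct) (auto intro: converse_rtranclp_into_rtranclp adj_sym)
  then show ?thesis using conn_adj by metis
qed

lemma conn_trans: "conn G F x y \<Longrightarrow> conn G F y z \<Longrightarrow> conn G F x z"
  unfolding conn_def by (rule rtranclp_trans)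

lemma conn_mono: assumes "conn G F x y" "F \<subseteq> F'" shows "conn G F' x y"
proof -
  have "(adj G F)\<^sup>*\<^sup>* x y" using assms conn_adj by metis
  moreover have "\<And>a b. adj G F a b \<Longrightarrow> adj G F' a b" using assms(2) unfolding adj_def by blast
  ultimately have "(adj G F')\<^sup>*\<^sup>* x y" by (metis mono_rtranclp)
  then show ?thesis using conn_adj by metis
qed

lemma conn_edge: assumes "g \<in> F" "ends G g = {a, b}" shows "conn G F a b"
  using assms unfolding conn_def by (intro r_into_rtranclp) blast

lemma card2_ends: assumes "card A = 2" "p \<in> A" "q \<in> A" "p \<noteq> q" shows "A = {p, q}"
proof -
  obtain a b where "A = {a, b}" "a \<noteq> b" using assms(1) card_2_iff by metis
  then show ?thesis using assms by auto
qed

lemma conn_edge2: assumes "g \<in> F" "card (ends G g) = 2" "p \<in> ends G g" "q \<in> ends G g"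
  shows "conn G F p q"
proof (cases "p = q")
  case False then show ?thesis using assms card2_ends conn_edge by metis
qed simp

lemma wf_ends: assumes "wf_graph G" "e \<in> edges G"
  shows "card (ends G e) = 2" "ends G e \<subseteq> verts G"
  using assms unfolding wf_graph_def by auto

lemma wf_ends_obtain: assumes "wf_graph G" "e \<in> edges G"
  obtains a b where "ends G e = {a, b}" "a \<noteq> b" "a \<in> verts G" "b \<in> verts G"
  using wf_ends[OF assms] card_2_iff by (metis insert_subset)

lemma conn_leave: assumes "conn G F a b" "a \<noteq> b"
  shows "\<exists>g \<in> F. a \<in> ends G g"
  using assms unfolding conn_def by (induction rule: converse_rtranclp_induct) auto

lemma conn_in_verts: assumes "conn G F a b" "a \<noteq> b" "wf_graph G" "F \<subseteq> edges G"
  shows "b \<in> verts G"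
  using assms unfolding conn_def
  by (induction rule: rtranclp_induct) (auto simp: wf_graph_def)

lemma comp_verts_eq: assumes "conn G F v v'"
  shows "comp_verts G F v = comp_verts G F v'"
  unfolding comp_verts_def using assms conn_sym conn_trans by metis

lemma comp_edges_eq: assumes "conn G F v v'"
  shows "comp_edges G F v = comp_edges G F v'"
  unfolding comp_edges_def using comp_verts_eq[OF assms] by simp

lemma degF_insert: assumes "finite F" "g \<notin> F"
  shows "degF G (insert g F) v = degF G F v + (if v \<in> ends G g then 1 else 0)"
proof -
  have "{e \<in> insert g F. v \<in> ends G e} = (if v \<in> ends G g then insert g {e \<in> F. v \<in> ends G e} else {e \<in> F. v \<in> ends G e})"
    by auto
  then show ?thesis unfolding degF_def using assms by auto
qed

lemma degF_finite: "finite F \<Longrightarrow> finite {e \<in> F. v \<in> ends G e}" by simp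



lemma path_edges:
  assumes "rtrancl_path (adj G F) x xs y" "distinct (x # xs)"
  shows "\<exists>P \<subseteq> F. finite P \<and> touched G P \<subseteq> set (x # xs) \<and> (x = y \<longrightarrow> P = {}) \<and>
     (x \<noteq> y \<longrightarrow> degF G P x = 1 \<and> degF G P y = 1 \<and> x \<in> touched G P \<and> y \<in> touched G P \<and>
        (\<forall>v \<in> touched G P - {x, y}. degF G P v = 2) \<and> (\<forall>v \<in> touched G P. conn G P x v))"
  using assms
proof (induction rule: rtrancl_path.induct)
  case (base x)
  then show ?case by (auto simp: touched_def)
next
  case (step x y' ys z)
  from step.prems have dist: "distinct (y' # ys)" and xn: "x \<notin> set (y' # ys)" by auto
  from step.IH[OF dist] obtain P' where P': "P' \<subseteq> F" "finite P'" "touched G P' \<subseteq> set (y' # ys)"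
    "y' = z \<longrightarrow> P' = {}"
    "y' \<noteq> z \<longrightarrow> degF G P' y' = 1 \<and> degF G P' z = 1 \<and> y' \<in> touched G P' \<and> z \<in> touched G P' \<and>
        (\<forall>v \<in> touched G P' - {y', z}. degF G P' v = 2) \<and> (\<forall>v \<in> touched G P'. conn G P' y' v)"
    by blast
  from step.hyps(1) obtain g where g: "g \<in> F" "ends G g = {x, y'}" unfolding adj_def by blast
  have xy': "x \<noteq> y'" using xn by auto
  have xnt: "x \<notin> touched G P'" using P'(3) xn by auto
  have gn: "g \<notin> P'" using xnt g unfolding touched_def by auto
  have zin: "z \<in> set (y' # ys)"
  proof (cases "y' = z")
    case False
    then have "z \<in> touched G P'" using P'(5) by blast
    then show ?thesis using P'(3) by blast
  qed simp
  have xz: "x \<noteq> z" using zin xn by auto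
  define P where "P = insert g P'"
  have tP: "touched G P = insert x (insert y' (touched G P'))"
    unfolding P_def touched_def using g by auto
  have deg: "\<And>v. degF G P v = degF G P' v + (if v \<in> {x, y'} then 1 else 0)"
    unfolding P_def using degF_insert[OF P'(2) gn, of G] g by simp
  have deg0: "\<And>v. v \<notin> touched G P' \<Longrightarrow> degF G P' v = 0"
  proof -
    fix v assume "v \<notin> touched G P'"
    then have h: "{e \<in> P'. v \<in> ends G e} = {}" unfolding touched_def by auto
    show "degF G P' v = 0" by (simp only: degF_def h card.empty)
  qed
  have connP: "\<forall>v \<in> touched G P. conn G P x v"
  proof
    fix v assume v: "v \<in> touched G P"
    have gP: "g \<in> P" unfolding P_def by simp
    have xy'c: "conn G P x y'" by (rule conn_edge[OF gP g(2)])
    show "conn G P x v"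
    proof (cases "v \<in> touched G P'")
      case True
      then have "y' \<noteq> z" using P'(4) unfolding touched_def by auto
      then have "conn G P' y' v" using P'(5) True by blast
      moreover have "P' \<subseteq> P" unfolding P_def by blast
      ultimately have "conn G P y' v" by (rule conn_mono)
      then show ?thesis by (rule conn_trans[OF xy'c])
    next
      case False
      then have "v = x \<or> v = y'" using v tP by blast
      then show ?thesis using xy'c by (elim disjE) simp_all
    qed
  qed
  show ?case
  proof (intro exI[of _ P] conjI impI)
    show "P \<subseteq> F" using P' g unfolding P_def by auto
    show "finite P" using P' unfolding P_def by auto
    show "touched G P \<subseteq> set (x # y' # ys)" using tP P'(3) by auto
    show "x = z \<Longrightarrow> P = {}" using xz by simp
    show "degF G P x = 1" using deg[of x] deg0[OF xnt] by simp
    show "degF G P z = 1"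
    proof (cases "y' = z")
      case True
      then have "P' = {}" using P'(4) by simp
      then have "degF G P' z = 0" unfolding degF_def by simp
      then show ?thesis using deg[of z] xz True by simp
    next
      case False
      then have "degF G P' z = 1" using P'(5) by blast
      then show ?thesis using deg[of z] xz False by simp
    qed
    show "x \<in> touched G P" using tP by simp
    show "z \<in> touched G P"
    proof (cases "y' = z")
      case True then show ?thesis using tP by simp
    next
      case False then have "z \<in> touched G P'" using P'(5) by blast
      then show ?thesis using tP by simp
    qed
    show "\<forall>v\<in>touched G P - {x, z}. degF G P v = 2"
    proof
      fix v assume v: "v \<in> touched G P - {x, z}"
      show "degF G P v = 2"
      proof (cases "v = y'")
        case True
        then have "y' \<noteq> z" using v by simp
        then have "degF G P' y' = 1" using P'(5) by blast
        then show ?thesis using deg[of v] True by simp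
      next
        case False
        then have vt: "v \<in> touched G P'" using v tP by auto
        then have "y' \<noteq> z" using P'(4) unfolding touched_def by auto
        then have "\<forall>v \<in> touched G P' - {y', z}. degF G P' v = 2" using P'(5) by blast
        then have "degF G P' v = 2" using vt v False by blast
        moreover have "v \<noteq> x" using v by simp
        ultimately show ?thesis using deg[of v] False by simp
      qed
    qed
    show "\<forall>v\<in>touched G P. conn G P x v" by (rule connP)
  qed
qed

lemma path_cycle:
  assumes "e \<in> F" "ends G e = {a, b}" "a \<noteq> b" "conn G (F - {e}) a b" "F \<subseteq> edges G"
  shows "\<not> acyclic_edges G F"
proof -
  obtain xs where "rtrancl_path (adj G (F - {e})) a xs b"
    using assms(4) conn_adj rtranclp_eq_rtrancl_path by metis
  then obtain xs' where p: "rtrancl_path (adj G (F - {e})) a xs' b" "distinct (a # xs')"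
    using rtrancl_path_distinct by metis
  from path_edges[OF p] assms(3) obtain P where P: "P \<subseteq> F - {e}" "finite P"
    "degF G P a = 1" "degF G P b = 1" "a \<in> touched G P" "b \<in> touched G P"
    "\<forall>v \<in> touched G P - {a, b}. degF G P v = 2" "\<forall>v \<in> touched G P. conn G P a v"
    by blast
  define S where "S = insert e P"
  have en: "e \<notin> P" using P by auto
  have tS: "touched G S = touched G P" unfolding S_def touched_def using assms P(5,6)
    unfolding touched_def by auto
  have deg: "\<And>v. degF G S v = degF G P v + (if v \<in> {a, b} then 1 else 0)"
    unfolding S_def using degF_insert[OF P(2) en, of G] assms by simp
  have "cycle_edges G S"
    unfolding cycle_edges_def
  proof (intro conjI ballI)
    show "S \<noteq> {}" unfolding S_def by simp
    show "S \<subseteq> edges G" unfolding S_def using assms P by auto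
    fix v assume v: "v \<in> touched G S"
    show "degF G S v = 2"
      using deg[of v] P v tS assms(3) by (cases "v \<in> {a, b}") auto
    fix y assume y: "y \<in> touched G S"
    have "conn G S a v" "conn G S a y" using P(8) v y tS conn_mono unfolding S_def
      by (metis subset_insertI)+
    then show "conn G S v y" using conn_sym conn_trans by metis
  qed
  moreover have "S \<subseteq> F" unfolding S_def using assms P by auto
  ultimately show ?thesis unfolding acyclic_edges_def by blast
qed



lemma double_count:
  assumes "finite K" "finite E"
  shows "(\<Sum>v\<in>K. card {g \<in> E. v \<in> ends G g}) = (\<Sum>g\<in>E. card (ends G g \<inter> K))"
proof -
  have "(\<Sum>v\<in>K. card {g \<in> E. v \<in> ends G g}) = (\<Sum>v\<in>K. \<Sum>g\<in>E. if v \<in> ends G g then 1 else 0)"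
    using assms by (simp add: sum.inter_filter[symmetric])
  also have "\<dots> = (\<Sum>g\<in>E. \<Sum>v\<in>K. if v \<in> ends G g then 1 else 0)" by (rule sum.swap)
  also have "\<dots> = (\<Sum>g\<in>E. card (ends G g \<inter> K))"
  proof (rule sum.cong)
    fix g assume "g \<in> E"
    have "(\<Sum>v\<in>K. if v \<in> ends G g then 1 else 0) = card {v \<in> K. v \<in> ends G g}"
      using assms by (simp add: sum.inter_filter[symmetric])
    also have "{v \<in> K. v \<in> ends G g} = ends G g \<inter> K" by blast
    finally show "(\<Sum>v\<in>K. if v \<in> ends G g then 1 else (0::nat)) = card (ends G g \<inter> K)" .
  qed simp
  finally show ?thesis .
qed

lemma cycle_minus_edge:
  assumes wf: "wf_graph G" and cyc: "cycle_edges G S" and eS: "e \<in> S"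
    and ee: "ends G e = {a, b}" and ab: "a \<noteq> b"
  shows "conn G (S - {e}) a b"
proof (rule ccontr)
  assume nc: "\<not> conn G (S - {e}) a b"
  define E where "E = S - {e}"
  define K where "K = {v \<in> touched G S. conn G E a v}"
  have Sedges: "S \<subseteq> edges G" using cyc unfolding cycle_edges_def by blast
  have finS: "finite S" using Sedges wf unfolding wf_graph_def by (meson finite_subset)
  have finE: "finite E" unfolding E_def using finS by simp
  have tsub: "touched G S \<subseteq> verts G" using Sedges wf unfolding wf_graph_def touched_def by blast
  have finK: "finite K" unfolding K_def using tsub wf unfolding wf_graph_def
    by (metis (no_types, lifting) finite_subset mem_Collect_eq subsetI)
  have SE: "S = insert e E" "e \<notin> E" unfolding E_def using eS by auto
  have aK: "a \<in> K" unfolding K_def touched_def using eS ee by auto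
  have bK: "b \<notin> K" unfolding K_def using nc E_def by auto
  have degv: "\<And>v. v \<in> K \<Longrightarrow> degF G E v + (if v = a then 1 else 0) = 2"
  proof -
    fix v assume v: "v \<in> K"
    then have "degF G S v = 2" using cyc unfolding cycle_edges_def K_def by blast
    moreover have "degF G S v = degF G E v + (if v \<in> ends G e then 1 else 0)"
      using degF_insert[OF finE SE(2), of G v] SE(1) by simp
    moreover have "v \<in> ends G e \<longleftrightarrow> v = a" using v bK ee by auto
    ultimately show "degF G E v + (if v = a then 1 else 0) = 2" by simp
  qed
  have "(\<Sum>v\<in>K. degF G E v + (if v = a then 1 else 0)) = (\<Sum>v\<in>K. 2)"
    using degv by (rule sum.cong[OF refl])
  then have s1: "(\<Sum>v\<in>K. degF G E v) + 1 = 2 * card K"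
    using finK aK by (simp add: sum.distrib)
  have s2: "(\<Sum>v\<in>K. degF G E v) = (\<Sum>g\<in>E. card (ends G g \<inter> K))"
    unfolding degF_def by (rule double_count[OF finK finE])
  have ev: "even (\<Sum>g\<in>E. card (ends G g \<inter> K))"
  proof (rule dvd_sum)
    fix g assume g: "g \<in> E"
    then have gS: "g \<in> S" unfolding E_def by simp
    have c2: "card (ends G g) = 2" using gS Sedges wf unfolding wf_graph_def by blast
    show "even (card (ends G g \<inter> K))"
    proof (cases "ends G g \<inter> K = {}")
      case False
      then obtain p where p: "p \<in> ends G g" "p \<in> K" by blast
      have "ends G g \<subseteq> K"
      proof
        fix q assume q: "q \<in> ends G g"
        have "conn G E p q" by (rule conn_edge2[OF g c2 p(1) q])
        moreover have "conn G E a p" using p(2) unfolding K_def by simp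
        ultimately have "conn G E a q" using conn_trans by metis
        moreover have "q \<in> touched G S" using q gS unfolding touched_def by blast
        ultimately show "q \<in> K" unfolding K_def by simp
      qed
      then have "ends G g \<inter> K = ends G g" by blast
      then show ?thesis using c2 by simp
    qed simp
  qed
  show False using s1 s2 ev by presburger
qed

definition ncomp :: "('v, 'e) mgraph \<Rightarrow> 'e set \<Rightarrow> nat" where
  "ncomp G F = card (comp_verts G F ` verts G)"

lemma conn_empty: "conn G {} x y \<longleftrightarrow> x = y"
proof
  assume "conn G {} x y"
  then show "x = y" unfolding conn_def by (induction rule: rtranclp_induct) auto
qed simp

lemma ncomp_empty: assumes "finite (verts G)" shows "ncomp G {} = card (verts G)"
proof -
  have "comp_verts G {} ` verts G = (\<lambda>v. {v}) ` verts G"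
    unfolding comp_verts_def conn_empty by (auto intro!: image_cong)
  moreover have "inj_on (\<lambda>v. {v}) (verts G)" by (simp add: inj_on_def)
  ultimately show ?thesis unfolding ncomp_def by (simp add: card_image)
qed

lemma conn_insert:
  assumes ee: "ends G e = {a, b}"
  shows "conn G (insert e F) x y \<longleftrightarrow>
    conn G F x y \<or> (conn G F x a \<and> conn G F b y) \<or> (conn G F x b \<and> conn G F a y)"
proof
  assume "conn G (insert e F) x y"
  then have "(adj G (insert e F))\<^sup>*\<^sup>* x y" using conn_adj by metis
  then show "conn G F x y \<or> (conn G F x a \<and> conn G F b y) \<or> (conn G F x b \<and> conn G F a y)"
  proof (induction rule: rtranclp_induct)
    case base then show ?case by simp
  next
    case (step y z)
    from step.hyps(2) obtain g where g: "g \<in> insert e F" "ends G g = {y, z}" unfolding adj_def by blast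
    show ?case
    proof (cases "g \<in> F")
      case True
      then have yz: "conn G F y z" using conn_edge g by metis
      then show ?thesis using step.IH conn_trans by metis
    next
      case False
      then have "g = e" using g by simp
      then have "{y, z} = {a, b}" using g ee by simp
      then have "(y = a \<and> z = b) \<or> (y = b \<and> z = a)" by (metis doubleton_eq_iff)
      then show ?thesis using step.IH conn_trans conn_sym conn_refl by metis
    qed
  qed
next
  have ab: "conn G (insert e F) a b" using conn_edge[OF _ ee] by simp
  have mono: "\<And>p q. conn G F p q \<Longrightarrow> conn G (insert e F) p q"
    using conn_mono by (metis subset_insertI)
  assume "conn G F x y \<or> (conn G F x a \<and> conn G F b y) \<or> (conn G F x b \<and> conn G F a y)"
  then show "conn G (insert e F) x y" using ab mono conn_trans conn_sym by metis
qed

lemma comp_insert_conn: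
  assumes ee: "ends G e = {a, b}" and ab: "conn G F a b"
  shows "comp_verts G (insert e F) = comp_verts G F"
proof -
  have "\<And>x y. conn G (insert e F) x y \<longleftrightarrow> conn G F x y"
    unfolding conn_insert[OF ee] using ab conn_trans conn_sym by metis
  then show ?thesis unfolding comp_verts_def by simp
qed

lemma comp_self: "v \<in> verts G \<Longrightarrow> v \<in> comp_verts G F v"
  unfolding comp_verts_def by simp

lemma ncomp_insert_nconn:
  assumes ee: "ends G e = {a, b}" and nab: "\<not> conn G F a b"
    and av: "a \<in> verts G" and bv: "b \<in> verts G" and fin: "finite (verts G)"
  shows "ncomp G (insert e F) + 1 = ncomp G F"
proof -
  define c where "c = comp_verts G F"
  define c' where "c' = comp_verts G (insert e F)"
  define V where "V = verts G"
  define Ka where "Ka = c a"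
  define Kb where "Kb = c b"
  have cdef: "\<And>v. c v = {u \<in> V. conn G F v u}" unfolding c_def V_def comp_verts_def by simp
  have c'v: "\<And>v. v \<in> V \<Longrightarrow> c' v = (if v \<in> Ka \<union> Kb then Ka \<union> Kb else c v)"
  proof -
    fix v assume v: "v \<in> V"
    have c'd: "c' v = {u \<in> V. conn G F v u \<or> (conn G F v a \<and> conn G F b u) \<or> (conn G F v b \<and> conn G F a u)}"
      unfolding c'_def V_def comp_verts_def conn_insert[OF ee] by simp
    show "c' v = (if v \<in> Ka \<union> Kb then Ka \<union> Kb else c v)"
    proof (cases "v \<in> Ka")
      case True
      then have av': "conn G F a v" unfolding Ka_def cdef by simp
      then have "\<not> conn G F v b" using nab conn_trans by metis
      moreover have "\<And>u. conn G F v u \<longleftrightarrow> conn G F a u" using av' conn_trans conn_sym by metis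
      ultimately have "c' v = Ka \<union> Kb" unfolding c'd Ka_def Kb_def cdef
        using av' conn_sym by auto
      then show ?thesis using True by simp
    next
      case nKa: False
      show ?thesis
      proof (cases "v \<in> Kb")
        case True
        then have bv': "conn G F b v" unfolding Kb_def cdef by simp
        then have "\<not> conn G F v a" using nab conn_trans conn_sym by metis
        moreover have "\<And>u. conn G F v u \<longleftrightarrow> conn G F b u" using bv' conn_trans conn_sym by metis
        ultimately have "c' v = Ka \<union> Kb" unfolding c'd Ka_def Kb_def cdef
          using bv' conn_sym by auto
        then show ?thesis using True by simp
      next
        case False
        have "\<not> conn G F a v" "\<not> conn G F b v" using nKa False v
          unfolding Ka_def Kb_def cdef by auto
        then have "\<not> conn G F v a" "\<not> conn G F v b" using conn_sym by metis+
        then have "c' v = c v" unfolding c'd cdef by simp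
        then show ?thesis using False nKa by simp
      qed
    qed
  qed
  define W where "W = V - (Ka \<union> Kb)"
  have aKa: "a \<in> Ka" unfolding Ka_def cdef using av V_def by simp
  have bKb: "b \<in> Kb" unfolding Kb_def cdef using bv V_def by simp
  have bnKa: "b \<notin> Ka" unfolding Ka_def cdef using nab by simp
  have KaV: "Ka \<subseteq> V" "Kb \<subseteq> V" unfolding Ka_def Kb_def cdef by auto
  have vc: "\<And>v. v \<in> V \<Longrightarrow> v \<in> c v" unfolding cdef by simp
  have im': "c' ` V = insert (Ka \<union> Kb) (c ` W)"
  proof
    show "c' ` V \<subseteq> insert (Ka \<union> Kb) (c ` W)" using c'v unfolding W_def by auto
    show "insert (Ka \<union> Kb) (c ` W) \<subseteq> c' ` V"
    proof
      fix K assume "K \<in> insert (Ka \<union> Kb) (c ` W)"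
      then show "K \<in> c' ` V"
      proof
        assume "K = Ka \<union> Kb" then show ?thesis using c'v[of a] aKa av V_def by (metis UnI1 image_eqI)
      next
        assume "K \<in> c ` W" then obtain v where "v \<in> W" "K = c v" by blast
        then show ?thesis using c'v[of v] unfolding W_def by (metis DiffD1 DiffD2 image_eqI)
      qed
    qed
  qed
  have im: "c ` V = insert Ka (insert Kb (c ` W))"
  proof
    show "c ` V \<subseteq> insert Ka (insert Kb (c ` W))"
    proof
      fix K assume "K \<in> c ` V"
      then obtain v where v: "v \<in> V" "K = c v" by blast
      show "K \<in> insert Ka (insert Kb (c ` W))"
      proof (cases "v \<in> Ka")
        case True
        then have "c v = Ka" unfolding Ka_def c_def using comp_verts_eq unfolding cdef
          by (metis (no_types, lifting) c_def cdef mem_Collect_eq)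
        then show ?thesis using v by simp
      next
        case False
        show ?thesis
        proof (cases "v \<in> Kb")
          case True
          then have "c v = Kb" unfolding Kb_def c_def using comp_verts_eq unfolding cdef
            by (metis (no_types, lifting) c_def cdef mem_Collect_eq)
          then show ?thesis using v by simp
        next
          case False2: False
          then have "v \<in> W" unfolding W_def using v False by simp
          then show ?thesis using v by simp
        qed
      qed
    qed
    show "insert Ka (insert Kb (c ` W)) \<subseteq> c ` V"
      unfolding Ka_def Kb_def W_def using av bv V_def by auto
  qed
  have nW: "\<And>K. K \<in> c ` W \<Longrightarrow> K \<inter> (Ka \<union> Kb) = {}"
  proof -
    fix K assume "K \<in> c ` W"
    then obtain v where v: "v \<in> W" "K = c v" by blast
    show "K \<inter> (Ka \<union> Kb) = {}"
    proof (rule ccontr)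
      assume "K \<inter> (Ka \<union> Kb) \<noteq> {}"
      then obtain u where u: "u \<in> c v" "u \<in> Ka \<union> Kb" using v by blast
      then have "conn G F v u" unfolding cdef by simp
      moreover have "conn G F a u \<or> conn G F b u" using u unfolding Ka_def Kb_def cdef by simp
      ultimately have "conn G F a v \<or> conn G F b v" using conn_trans conn_sym by metis
      then show False using v unfolding W_def Ka_def Kb_def cdef by auto
    qed
  qed
  have finW: "finite (c ` W)" unfolding W_def V_def using fin by simp
  have n1: "Ka \<union> Kb \<notin> c ` W" using nW aKa by blast
  have n2: "Ka \<notin> c ` W" using nW aKa by blast
  have n3: "Kb \<notin> c ` W" using nW bKb by blast
  have n4: "Ka \<noteq> Kb" using bKb bnKa by blast
  have "card (c' ` V) = card (c ` W) + 1" unfolding im' using finW n1 by simp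
  moreover have "card (c ` V) = card (c ` W) + 2" unfolding im using finW n2 n3 n4 by simp
  ultimately show ?thesis unfolding ncomp_def c_def c'_def V_def by simp
qed

lemma ncomp_lb:
  assumes wf: "wf_graph G" and fin: "finite F" and sub: "F \<subseteq> edges G"
  shows "card (verts G) \<le> ncomp G F + card F"
  using fin sub
proof (induction rule: finite_induct)
  case empty
  have "finite (verts G)" using wf unfolding wf_graph_def by simp
  then show ?case using ncomp_empty[of G] by simp
next
  case (insert e F)
  then have eE: "e \<in> edges G" by simp
  obtain a b where ab: "ends G e = {a, b}" "a \<in> verts G" "b \<in> verts G"
    using wf_ends_obtain[OF wf eE] by metis
  show ?case
  proof (cases "conn G F a b")
    case True
    then have "ncomp G (insert e F) = ncomp G F" unfolding ncomp_def using comp_insert_conn[OF ab(1)] by simp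
    then show ?thesis using insert by simp
  next
    case False
    then have "ncomp G (insert e F) + 1 = ncomp G F"
      using ncomp_insert_nconn[OF ab(1) False ab(2,3)] wf unfolding wf_graph_def by simp
    then show ?thesis using insert by simp
  qed
qed

lemma acyclic_subset: "acyclic_edges G F \<Longrightarrow> F' \<subseteq> F \<Longrightarrow> acyclic_edges G F'"
  unfolding acyclic_edges_def by blast

lemma forest_count:
  assumes wf: "wf_graph G" and sub: "F \<subseteq> edges G" and acy: "acyclic_edges G F"
  shows "ncomp G F + card F = card (verts G)"
proof -
  have fin: "finite F" using sub wf unfolding wf_graph_def by (meson finite_subset)
  show ?thesis using fin sub acy
  proof (induction rule: finite_induct)
    case empty
    have "finite (verts G)" using wf unfolding wf_graph_def by simp
    then show ?case using ncomp_empty[of G] by simp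
  next
    case (insert e F)
    then have eE: "e \<in> edges G" by simp
    obtain a b where ab: "ends G e = {a, b}" "a \<noteq> b" "a \<in> verts G" "b \<in> verts G"
      using wf_ends_obtain[OF wf eE] by metis
    have acyF: "acyclic_edges G F" using insert.prems acyclic_subset by blast
    have "\<not> conn G F a b"
    proof
      assume "conn G F a b"
      then have "conn G (insert e F - {e}) a b" using insert.hyps(2) by simp
      then have "\<not> acyclic_edges G (insert e F)"
        using path_cycle[OF _ ab(1,2)] insert.prems by blast
      then show False using insert.prems by simp
    qed
    then have "ncomp G (insert e F) + 1 = ncomp G F"
      using ncomp_insert_nconn[OF ab(1) _ ab(3,4)] wf unfolding wf_graph_def by simp
    then show ?case using insert acyF by simp
  qed
qed

lemma count_tree:
  assumes wf: "wf_graph G" and sub: "F \<subseteq> edges G" and cnt: "ncomp G F + card F = card (verts G)"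
  shows "acyclic_edges G F"
proof (rule ccontr)
  assume "\<not> acyclic_edges G F"
  then obtain S where S: "S \<subseteq> F" "cycle_edges G S" unfolding acyclic_edges_def by blast
  then obtain e where eS: "e \<in> S" unfolding cycle_edges_def by blast
  then have eE: "e \<in> edges G" using S sub by blast
  obtain a b where ab: "ends G e = {a, b}" "a \<noteq> b"
    using wf_ends_obtain[OF wf eE] by metis
  have "conn G (S - {e}) a b" by (rule cycle_minus_edge[OF wf S(2) eS ab])
  then have c: "conn G (F - {e}) a b" using conn_mono S(1) by (metis Diff_mono order_refl)
  have fin: "finite F" using sub wf unfolding wf_graph_def by (meson finite_subset)
  have eF: "e \<in> F" using S eS by blast
  have "ncomp G F = ncomp G (F - {e})"
    using comp_insert_conn[OF ab(1) c] eF unfolding ncomp_def by (simp add: insert_absorb)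
  moreover have "card (verts G) \<le> ncomp G (F - {e}) + card (F - {e})"
    using ncomp_lb[OF wf] fin sub by auto
  moreover have "card F = card (F - {e}) + 1" using fin eF
    by (metis card_Suc_Diff1 Suc_eq_plus1)
  ultimately show False using cnt by simp
qed



locale ctx25 =
  fixes X :: "('w, 'x) mgraph" and Y :: "('w, 'y) mgraph" and Out :: "'w set"
    and G :: "('v, 'e) mgraph" and f :: "'w \<Rightarrow> 'v" and \<chi> :: "'x \<Rightarrow> 'e"
    and T C M :: "'e set" and TY :: "'y set"
  assumes tX: "template X Out" and tY: "template Y Out"
    and cub: "cubic G"
    and emb: "embedding G X Out f \<chi>"
    and dec: "three_decomp G T C M"
    and tcX: "three_consistent X Out (restrict_to X \<chi> T)"
    and tcY: "three_consistent Y Out TY"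
    and lab: "\<forall>v \<in> Out. label_of Y TY v = label_of X (restrict_to X \<chi> T) v"
    and cn: "\<forall>v \<in> Out. \<forall>w \<in> Out. conn X (restrict_to X \<chi> T) v w \<longleftrightarrow> conn Y TY v w"
begin

definition "inX = verts X - Out"
definition "inY = verts Y - Out"
definition "R = f ` inX"
definition "EXg = \<chi> ` edges X"
definition "TX = restrict_to X \<chi> T"
definition "H = transform G X Y Out f \<chi>"
definition "em w = (if w \<in> Out then Inl (f w) else Inr w)"
definition "Fo = T - EXg"
definition "RY = edges Y - TY"
definition "RX = edges X - TX"
definition "CY = {e \<in> RY. \<exists>v \<in> ends Y e. card (comp_edges Y RY v) \<noteq> 1}"
definition "MY = {e \<in> RY. \<exists>v \<in> ends Y e. card (comp_edges Y RY v) = 1}"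
definition "T' = Inl ` Fo \<union> Inr ` TY"
definition "C' = Inl ` (C - EXg) \<union> Inr ` CY"
definition "M' = Inl ` (M - EXg) \<union> Inr ` MY"

lemma wfX: "wf_graph X" using tX unfolding template_def by simp
lemma wfY: "wf_graph Y" using tY unfolding template_def by simp
lemma wfG: "wf_graph G" using cub unfolding cubic_def by simp
lemma OutX: "Out \<subseteq> verts X" using tX unfolding template_def by simp
lemma OutY: "Out \<subseteq> verts Y" using tY unfolding template_def by simp
lemma finOut: "finite Out" using OutX wfX unfolding wf_graph_def by (meson finite_subset)

lemma finj: "inj_on f inX" using emb unfolding embedding_def inX_def by simp
lemma Rsub: "R \<subseteq> verts G" using emb unfolding embedding_def inX_def R_def by simp
lemma fOut: "w \<in> Out \<Longrightarrow> f w \<in> verts G \<and> f w \<notin> R"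
  using emb unfolding embedding_def inX_def R_def by blast
lemma chibij: "bij_betw \<chi> (edges X) {e \<in> edges G. ends G e \<inter> R \<noteq> {}}"
  using emb unfolding embedding_def inX_def R_def by simp
lemma chiinj: "inj_on \<chi> (edges X)" using chibij bij_betw_def by blast
lemma EXg_char: "EXg = {e \<in> edges G. ends G e \<inter> R \<noteq> {}}"
  using chibij unfolding bij_betw_def EXg_def by simp
lemma EXgsub: "EXg \<subseteq> edges G" using EXg_char by blast
lemma ends_chi: "e \<in> edges X \<Longrightarrow> ends G (\<chi> e) = f ` ends X e"
  using emb unfolding embedding_def by blast

lemma outside_edge: "g \<in> edges G - EXg \<Longrightarrow> ends G g \<inter> R = {}"
  using EXg_char by blast

lemma TX_def2: "TX = {e \<in> edges X. \<chi> e \<in> T}" unfolding TX_def restrict_to_def by simp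

lemma f_in_R_iff: assumes "z \<in> verts X" shows "f z \<in> R \<longleftrightarrow> z \<in> inX"
  using assms fOut unfolding R_def inX_def by auto

lemma f_eq_inner: assumes "u \<in> inX" "z \<in> verts X" "f z = f u" shows "z = u"
proof -
  have "f z \<in> R" using assms unfolding R_def by simp
  then have "z \<in> inX" using f_in_R_iff[OF assms(2)] by simp
  then show ?thesis using finj assms inj_on_def by metis
qed

lemma template_edge_outer:
  assumes tpl: "template Z Out" and e: "e \<in> edges Z" and p: "p \<in> ends Z e" "p \<in> Out"
    and q: "q \<in> ends Z e" "q \<in> Out"
  shows "p = q"
proof (rule ccontr)
  assume "p \<noteq> q"
  have "card (ends Z e) = 2" using tpl e unfolding template_def wf_graph_def by blast
  then have "ends Z e = {p, q}" using card2_ends p q \<open>p \<noteq> q\<close> by metis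
  then show False using tpl e p q unfolding template_def by auto
qed

lemma out_edge_prop:
  assumes tpl: "template Z Out" and w: "w \<in> Out"
  shows "out_edge Z w \<in> edges Z \<and> w \<in> ends Z (out_edge Z w) \<and>
    (\<forall>e \<in> edges Z. w \<in> ends Z e \<longrightarrow> e = out_edge Z w)"
proof -
  have "card {e \<in> edges Z. w \<in> ends Z e} = 1"
    using tpl w unfolding template_def deg_def degF_def by blast
  then obtain e0 where e0: "{e \<in> edges Z. w \<in> ends Z e} = {e0}" using card_1_singletonE by blast
  then have "out_edge Z w = e0" unfolding out_edge_def by (rule_tac the_equality) blast+
  then show ?thesis using e0 by blast
qed

lemma out_edge_inj:
  assumes tpl: "template Z Out" and w: "w \<in> Out" "w' \<in> Out" "out_edge Z w = out_edge Z w'"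
  shows "w = w'"
  using out_edge_prop[OF tpl w(1)] out_edge_prop[OF tpl w(2)] template_edge_outer[OF tpl] w by metis

lemma out_edge_other:
  assumes tpl: "template Z Out" and w: "w \<in> Out"
  obtains u where "ends Z (out_edge Z w) = {w, u}" "u \<noteq> w" "u \<in> verts Z - Out"
proof -
  have wf: "wf_graph Z" using tpl unfolding template_def by simp
  have e: "out_edge Z w \<in> edges Z" "w \<in> ends Z (out_edge Z w)" using out_edge_prop[OF tpl w] by auto
  obtain a b where ab: "ends Z (out_edge Z w) = {a, b}" "a \<noteq> b" "a \<in> verts Z" "b \<in> verts Z"
    using wf_ends_obtain[OF wf e(1)] by metis
  obtain u where u: "ends Z (out_edge Z w) = {w, u}" "u \<noteq> w" "u \<in> verts Z"
    using ab e(2) by (metis insert_commute insertE singletonD)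
  have "u \<notin> Out" using template_edge_outer[OF tpl e(1) e(2) w] u by auto
  then show ?thesis using that u by blast
qed

lemma H_verts: "verts H = Inl ` (verts G - R) \<union> Inr ` inY"
  unfolding H_def transform_def R_def inY_def inX_def by simp
lemma H_edges: "edges H = Inl ` (edges G - EXg) \<union> Inr ` edges Y"
  unfolding H_def transform_def EXg_def by simp
lemma H_ends_l: "ends H (Inl g) = Inl ` ends G g"
  unfolding H_def transform_def by simp
lemma H_ends_r: "ends H (Inr e) = em ` ends Y e"
  unfolding H_def transform_def em_def by simp

lemma em_inj_edge:
  assumes e: "e \<in> edges Y" shows "inj_on em (ends Y e)"
proof (rule inj_onI)
  fix p q assume pq: "p \<in> ends Y e" "q \<in> ends Y e" "em p = em q"
  show "p = q"
  proof (cases "p \<in> Out")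
    case True
    then have "q \<in> Out" using pq unfolding em_def by (auto split: if_splits)
    then show ?thesis using template_edge_outer[OF tY e] pq True by blast
  next
    case False
    then have "q \<notin> Out" using pq unfolding em_def by (auto split: if_splits)
    then show ?thesis using pq False unfolding em_def by simp
  qed
qed

lemma em_verts: "w \<in> verts Y \<Longrightarrow> em w \<in> verts H"
  unfolding H_verts em_def inY_def using fOut by auto

lemma wfH: "wf_graph H"
  unfolding wf_graph_def
proof (intro conjI ballI)
  show "finite (verts H)" unfolding H_verts inY_def using wfG wfY unfolding wf_graph_def by simp
  show "finite (edges H)" unfolding H_edges using wfG wfY unfolding wf_graph_def by simp
  fix g assume g: "g \<in> edges H"
  show "ends H g \<subseteq> verts H"
  proof (cases g)
    case (Inl g0)
    then have g0: "g0 \<in> edges G - EXg" using g unfolding H_edges by auto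
    then have "ends G g0 \<subseteq> verts G - R" using outside_edge wfG unfolding wf_graph_def by blast
    then show ?thesis unfolding Inl H_ends_l H_verts by blast
  next
    case (Inr e)
    then have e: "e \<in> edges Y" using g unfolding H_edges by auto
    then have "ends Y e \<subseteq> verts Y" using wfY unfolding wf_graph_def by blast
    then show ?thesis unfolding Inr H_ends_r using em_verts by blast
  qed
  show "card (ends H g) = 2"
  proof (cases g)
    case (Inl g0)
    then have g0: "g0 \<in> edges G" using g unfolding H_edges by auto
    then show ?thesis unfolding Inl H_ends_l using wfG unfolding wf_graph_def
      by (simp add: card_image)
  next
    case (Inr e)
    then have e: "e \<in> edges Y" using g unfolding H_edges by auto
    then show ?thesis unfolding Inr H_ends_r using wfY em_inj_edge[OF e] unfolding wf_graph_def
      by (simp add: card_image)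
  qed
qed

lemma dec_parts: "T \<union> C \<union> M = edges G" "T \<inter> C = {}" "T \<inter> M = {}" "C \<inter> M = {}"
  "spanning_tree G T" "two_regular G C" "matching G M"
  using dec unfolding three_decomp_def by auto

lemma TY_sub: "TY \<subseteq> edges Y" using tcY unfolding three_consistent_def by simp
lemma TX_sub: "TX \<subseteq> edges X" unfolding TX_def2 by auto

end



lemma edge_in_comp:
  assumes wf: "wf_graph Z" and F: "F \<subseteq> edges Z" and e: "e \<in> F" and v: "v \<in> ends Z e"
  shows "e \<in> comp_edges Z F v"
proof -
  have c2: "card (ends Z e) = 2" and sub: "ends Z e \<subseteq> verts Z" using wf F e unfolding wf_graph_def by auto
  have "ends Z e \<subseteq> comp_verts Z F v"
    unfolding comp_verts_def using conn_edge2[OF e c2 v] sub by blast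
  then show ?thesis unfolding comp_edges_def using e by simp
qed

lemma comp_edge_ends:
  assumes wf: "wf_graph Z" and F: "F \<subseteq> edges Z" and e: "e \<in> F" and v: "v \<in> ends Z e" and v': "v' \<in> ends Z e"
  shows "comp_edges Z F v = comp_edges Z F v'"
proof -
  have c2: "card (ends Z e) = 2" using wf F e unfolding wf_graph_def by auto
  show ?thesis using comp_edges_eq conn_edge2[OF e c2 v v'] by metis
qed

lemma comp_edges_sub: "comp_edges Z F v \<subseteq> F" unfolding comp_edges_def by blast

context ctx25
begin

lemma out_conn_lemma:
  assumes tpl: "template Z Out" and w: "w \<in> Out" and eu: "ends Z (out_edge Z w) = {w, u}"
    and F: "F \<subseteq> edges Z" and c: "conn Z F w z"
  shows "z \<in> {w, u} \<or> (\<exists>g \<in> F - {out_edge Z w}. u \<in> ends Z g)"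
  using c unfolding conn_def
proof (induction rule: rtranclp_induct)
  case base then show ?case by simp
next
  case (step y z)
  from step.hyps(2) obtain g where g: "g \<in> F" "ends Z g = {y, z}" by blast
  have oe: "\<forall>e \<in> edges Z. w \<in> ends Z e \<longrightarrow> e = out_edge Z w" using out_edge_prop[OF tpl w] by blast
  show ?case using step.IH
  proof
    assume "y \<in> {w, u}"
    then show ?thesis
    proof
      assume "y = w"
      then have "g = out_edge Z w" using oe g F by blast
      then show ?thesis using g eu by auto
    next
      assume yu: "y \<in> {u}"
      show ?thesis
      proof (cases "g = out_edge Z w")
        case True then show ?thesis using g eu by auto
      next
        case False then show ?thesis using g yu by auto
      qed
    qed
  qed simp
qed


lemma finRY: "finite RY" unfolding RY_def using wfY unfolding wf_graph_def by simp
lemma RY_sub: "RY \<subseteq> edges Y" unfolding RY_def by simp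
lemma RX_sub: "RX \<subseteq> edges X" unfolding RX_def by simp

lemma CY_sub: "CY \<subseteq> RY" and MY_sub: "MY \<subseteq> RY" unfolding CY_def MY_def by auto

lemma CY_iff: assumes "e \<in> RY" "v \<in> ends Y e"
  shows "e \<in> CY \<longleftrightarrow> card (comp_edges Y RY v) \<noteq> 1"
proof -
  have "\<forall>v' \<in> ends Y e. comp_edges Y RY v' = comp_edges Y RY v"
    using comp_edge_ends[OF wfY RY_sub assms(1) _ assms(2)] by blast
  note eq = this
  show ?thesis
  proof
    assume "e \<in> CY"
    then obtain v' where "v' \<in> ends Y e" "card (comp_edges Y RY v') \<noteq> 1" unfolding CY_def by blast
    then show "card (comp_edges Y RY v) \<noteq> 1" using eq by metis
  next
    assume "card (comp_edges Y RY v) \<noteq> 1"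
    then show "e \<in> CY" unfolding CY_def using assms by blast
  qed
qed

lemma MY_iff: assumes "e \<in> RY" "v \<in> ends Y e"
  shows "e \<in> MY \<longleftrightarrow> card (comp_edges Y RY v) = 1"
proof -
  have "\<forall>v' \<in> ends Y e. comp_edges Y RY v' = comp_edges Y RY v"
    using comp_edge_ends[OF wfY RY_sub assms(1) _ assms(2)] by blast
  note eq = this
  show ?thesis
  proof
    assume "e \<in> MY"
    then obtain v' where "v' \<in> ends Y e" "card (comp_edges Y RY v') = 1" unfolding MY_def by blast
    then show "card (comp_edges Y RY v) = 1" using eq by metis
  next
    assume "card (comp_edges Y RY v) = 1"
    then show "e \<in> MY" unfolding MY_def using assms by blast
  qed
qed

lemma ends_ne_Y: "e \<in> edges Y \<Longrightarrow> \<exists>v. v \<in> ends Y e"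
proof -
  assume "e \<in> edges Y"
  then obtain a b where "ends Y e = {a, b}" using wf_ends_obtain[OF wfY] by metis
  then show "\<exists>v. v \<in> ends Y e" by blast
qed

lemma CY_MY: "CY \<union> MY = RY" "CY \<inter> MY = {}"
proof -
  show "CY \<union> MY = RY"
  proof
    show "CY \<union> MY \<subseteq> RY" using CY_sub MY_sub by blast
    show "RY \<subseteq> CY \<union> MY"
    proof
      fix e assume e: "e \<in> RY"
      then obtain v where v: "v \<in> ends Y e" using ends_ne_Y RY_sub by blast
      show "e \<in> CY \<union> MY" using CY_iff[OF e v] MY_iff[OF e v] by blast
    qed
  qed
  show "CY \<inter> MY = {}"
  proof (rule ccontr)
    assume "CY \<inter> MY \<noteq> {}"
    then obtain e where e: "e \<in> CY" "e \<in> MY" by blast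
    then have eR: "e \<in> RY" using CY_sub by blast
    then obtain v where v: "v \<in> ends Y e" using ends_ne_Y RY_sub by blast
    show False using CY_iff[OF eR v] MY_iff[OF eR v] e by blast
  qed
qed

lemma label_Y:
  assumes w: "w \<in> Out"
  shows "out_edge Y w \<in> CY \<longleftrightarrow> label_of Y TY w = LabC"
    and "out_edge Y w \<in> MY \<longleftrightarrow> label_of Y TY w = LabM"
proof -
  define e where "e = out_edge Y w"
  have e: "e \<in> edges Y" "w \<in> ends Y e" using out_edge_prop[OF tY w] unfolding e_def by auto
  have "(e \<in> CY \<longleftrightarrow> label_of Y TY w = LabC) \<and> (e \<in> MY \<longleftrightarrow> label_of Y TY w = LabM)"
  proof (cases "e \<in> TY")
    case True
    then have "e \<notin> RY" unfolding RY_def by simp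
    moreover have "label_of Y TY w = LabT" unfolding label_of_def e_def[symmetric] Let_def using True by simp
    ultimately show ?thesis using CY_sub MY_sub by auto
  next
    case False
    then have eR: "e \<in> RY" unfolding RY_def using e by simp
    have ec: "e \<in> comp_edges Y RY w" by (rule edge_in_comp[OF wfY RY_sub eR e(2)])
    have fin: "finite (comp_edges Y RY w)" using finRY comp_edges_sub finite_subset by metis
    have "comp_edges Y RY w = {e} \<longleftrightarrow> card (comp_edges Y RY w) = 1"
    proof
      assume "card (comp_edges Y RY w) = 1"
      then obtain x where "comp_edges Y RY w = {x}" using card_1_singletonE by blast
      then show "comp_edges Y RY w = {e}" using ec by simp
    qed simp
    moreover have "label_of Y TY w = (if comp_edges Y RY w = {e} then LabM else LabC)"
      unfolding label_of_def e_def[symmetric] Let_def RY_def using False by simp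
    ultimately show ?thesis using CY_iff[OF eR e(2)] MY_iff[OF eR e(2)] by auto
  qed
  then show "out_edge Y w \<in> CY \<longleftrightarrow> label_of Y TY w = LabC"
    and "out_edge Y w \<in> MY \<longleftrightarrow> label_of Y TY w = LabM" unfolding e_def by auto
qed

lemma tcY_at: assumes "v \<in> verts Y"
  shows "comp_edges Y RY v = {} \<or> card (comp_edges Y RY v) = 1 \<or> cycle_edges Y (comp_edges Y RY v)
     \<or> outer_path Y Out (comp_verts Y RY v) (comp_edges Y RY v)"
proof -
  have h: "\<forall>v\<in>verts Y. let K = comp_verts Y (edges Y - TY) v; S = comp_edges Y (edges Y - TY) v in
     S = {} \<or> card S = 1 \<or> cycle_edges Y S \<or> outer_path Y Out K S"
    using tcY unfolding three_consistent_def by (rule conjunct2[OF conjunct2[OF conjunct2]])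
  have "let K = comp_verts Y (edges Y - TY) v; S = comp_edges Y (edges Y - TY) v in
     S = {} \<or> card S = 1 \<or> cycle_edges Y S \<or> outer_path Y Out K S" using bspec[OF h assms] .
  then show ?thesis unfolding RY_def Let_def .
qed

lemma degCY: assumes v: "v \<in> inY" shows "degF Y CY v = 0 \<or> degF Y CY v = 2"
proof (cases "\<exists>e \<in> CY. v \<in> ends Y e")
  case False
  then have h: "{e \<in> CY. v \<in> ends Y e} = {}" by blast
  show ?thesis unfolding degF_def h by simp
next
  case True
  then obtain e where e: "e \<in> CY" "v \<in> ends Y e" by blast
  have eR: "e \<in> RY" using e CY_sub by blast
  define S where "S = comp_edges Y RY v"
  have cS: "card S \<noteq> 1" using CY_iff[OF eR e(2)] e(1) unfolding S_def by simp
  have eS: "e \<in> S" unfolding S_def by (rule edge_in_comp[OF wfY RY_sub eR e(2)])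
  have eq: "{e \<in> CY. v \<in> ends Y e} = {e \<in> S. v \<in> ends Y e}"
  proof
    show "{e \<in> CY. v \<in> ends Y e} \<subseteq> {e \<in> S. v \<in> ends Y e}"
    proof
      fix g assume g: "g \<in> {e \<in> CY. v \<in> ends Y e}"
      then have gR: "g \<in> RY" using CY_sub by blast
      have gv: "v \<in> ends Y g" using g by simp
      have "g \<in> S" unfolding S_def by (rule edge_in_comp[OF wfY RY_sub gR gv])
      then show "g \<in> {e \<in> S. v \<in> ends Y e}" using gv by simp
    qed
    show "{e \<in> S. v \<in> ends Y e} \<subseteq> {e \<in> CY. v \<in> ends Y e}"
    proof
      fix g assume g: "g \<in> {e \<in> S. v \<in> ends Y e}"
      then have gR: "g \<in> RY" "v \<in> ends Y g" using comp_edges_sub[of Y RY v] unfolding S_def by auto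
      have "card (comp_edges Y RY v) \<noteq> 1" using cS unfolding S_def .
      then have "g \<in> CY" using CY_iff[OF gR] by simp
      then show "g \<in> {e \<in> CY. v \<in> ends Y e}" using gR by simp
    qed
  qed
  have vV: "v \<in> verts Y" "v \<notin> Out" using v unfolding inY_def by auto
  have finS: "finite S" unfolding S_def using finRY comp_edges_sub finite_subset by metis
  have d0: "degF Y S v \<noteq> 0"
  proof
    assume "degF Y S v = 0"
    then have "{e \<in> S. v \<in> ends Y e} = {}" unfolding degF_def using finS by simp
    then show False using eS e(2) by blast
  qed
  have Sne: "S \<noteq> {}" using eS by blast
  have "cycle_edges Y S \<or> outer_path Y Out (comp_verts Y RY v) S"
    using tcY_at[OF vV(1)] Sne cS unfolding S_def[symmetric] by blast
  then have "degF Y S v = 2"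
  proof
    assume cyc: "cycle_edges Y S"
    have "v \<in> touched Y S" using eS e(2) unfolding touched_def by blast
    then show ?thesis using cyc unfolding cycle_edges_def by blast
  next
    assume op: "outer_path Y Out (comp_verts Y RY v) S"
    have vc: "v \<in> comp_verts Y RY v" using comp_self[OF vV(1)] .
    have "degF Y S v \<le> 2" using op vc unfolding outer_path_def by blast
    moreover have "degF Y S v \<noteq> 1" using op vc vV(2) unfolding outer_path_def by blast
    ultimately show ?thesis using d0 by linarith
  qed
  then show ?thesis unfolding degF_def eq by simp
qed

lemma degMY: assumes v: "v \<in> inY" shows "degF Y MY v \<le> 1"
proof (cases "\<exists>e \<in> MY. v \<in> ends Y e")
  case False
  then have h: "{e \<in> MY. v \<in> ends Y e} = {}" by blast
  show ?thesis unfolding degF_def h by simp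
next
  case True
  then obtain e where e: "e \<in> MY" "v \<in> ends Y e" by blast
  have eR: "e \<in> RY" using e MY_sub by blast
  define S where "S = comp_edges Y RY v"
  have cS: "card S = 1" using MY_iff[OF eR e(2)] e(1) unfolding S_def by simp
  have sub: "{e \<in> MY. v \<in> ends Y e} \<subseteq> S"
  proof
    fix g assume g: "g \<in> {e \<in> MY. v \<in> ends Y e}"
    then have gR: "g \<in> RY" using MY_sub by blast
    have gv: "v \<in> ends Y g" using g by simp
    show "g \<in> S" unfolding S_def by (rule edge_in_comp[OF wfY RY_sub gR gv])
  qed
  have finS: "finite S" unfolding S_def using finRY comp_edges_sub finite_subset by metis
  have "card {e \<in> MY. v \<in> ends Y e} \<le> card S" by (rule card_mono[OF finS sub])
  then show ?thesis unfolding degF_def using cS by simp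
qed

end



context ctx25
begin

lemma Csub: "C \<subseteq> edges G" and Msub: "M \<subseteq> edges G" and Tsub: "T \<subseteq> edges G"
  using dec_parts(1) by auto

lemma finEG: "finite (edges G)" using wfG unfolding wf_graph_def by simp

lemma finC: "finite C" and finM: "finite M" and finT: "finite T"
  using finite_subset[OF Csub finEG] finite_subset[OF Msub finEG] finite_subset[OF Tsub finEG] by auto

lemma label_X:
  assumes w: "w \<in> Out"
  shows "(\<chi> (out_edge X w) \<in> C \<longleftrightarrow> label_of X TX w = LabC) \<and>
         (\<chi> (out_edge X w) \<in> M \<longleftrightarrow> label_of X TX w = LabM)"
proof -
  define e where "e = out_edge X w"
  obtain u where u: "ends X e = {w, u}" "u \<noteq> w" "u \<in> verts X - Out"
    using out_edge_other[OF tX w] unfolding e_def by metis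
  have uin: "u \<in> inX" using u unfolding inX_def by simp
  have eX: "e \<in> edges X" using out_edge_prop[OF tX w] unfolding e_def by simp
  have oe: "\<And>g. g \<in> edges X \<Longrightarrow> w \<in> ends X g \<Longrightarrow> g = e" using out_edge_prop[OF tX w] unfolding e_def by blast
  have ge: "\<chi> e \<in> edges G" using eX EXgsub unfolding EXg_def by blast
  have endsG: "ends G (\<chi> e) = {f w, f u}" using ends_chi[OF eX] u by simp
  have fuR: "f u \<in> R" using uin unfolding R_def by simp
  have fuV: "f u \<in> verts G" using fuR Rsub by blast
  have fwV: "f w \<in> verts G" and fwR: "f w \<notin> R" using fOut[OF w] by auto
  have fuw: "f u \<noteq> f w" using fuR fwR by metis
  have TXe: "e \<in> TX \<longleftrightarrow> \<chi> e \<in> T" unfolding TX_def2 using eX by simp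
  have tr: "\<forall>v \<in> verts G. degF G C v = 0 \<or> degF G C v = 2" using dec_parts(6) unfolding two_regular_def by blast
  have mt: "\<forall>v \<in> verts G. degF G M v \<le> 1" using dec_parts(7) unfolding matching_def by blast
  show ?thesis
  proof (cases "e \<in> TX")
    case True
    then have "\<chi> e \<in> T" using TXe by simp
    then have "\<chi> e \<notin> C" "\<chi> e \<notin> M" using dec_parts(2,3) by blast+
    moreover have "label_of X TX w = LabT" unfolding label_of_def e_def[symmetric] Let_def using True by simp
    ultimately show ?thesis unfolding e_def by simp
  next
    case False
    then have nT: "\<chi> e \<notin> T" using TXe by simp
    have eRX: "e \<in> RX" unfolding RX_def using eX False by simp
    have ecomp: "e \<in> comp_edges X RX w" using edge_in_comp[OF wfX RX_sub eRX] u(1) by simp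
    have labdef: "label_of X TX w = (if comp_edges X RX w = {e} then LabM else LabC)"
      unfolding label_of_def e_def[symmetric] Let_def RX_def using False by simp
    have CM: "\<chi> e \<in> C \<or> \<chi> e \<in> M" using ge nT dec_parts(1) by blast
    have CMd: "\<not> (\<chi> e \<in> C \<and> \<chi> e \<in> M)" using dec_parts(4) by blast
    have A: "comp_edges X RX w \<noteq> {e}" if eC: "\<chi> e \<in> C"
    proof -
      define Cs where "Cs = {g \<in> C. f u \<in> ends G g}"
      have finCs: "finite Cs" unfolding Cs_def using finC by simp
      have eCs: "\<chi> e \<in> Cs" unfolding Cs_def using eC endsG by simp
      have "card Cs \<noteq> 0" using finCs eCs by auto
      moreover have "degF G C (f u) = 0 \<or> degF G C (f u) = 2" using tr fuV by blast
      ultimately have c2: "card Cs = 2" unfolding degF_def Cs_def by linarith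
      have "\<not> Cs \<subseteq> {\<chi> e}"
      proof
        assume "Cs \<subseteq> {\<chi> e}"
        then have "card Cs \<le> 1" using card_mono[of "{\<chi> e}" Cs] by simp
        then show False using c2 by simp
      qed
      then obtain g where g: "g \<in> Cs" "g \<noteq> \<chi> e" by blast
      have gC: "g \<in> C" and gu: "f u \<in> ends G g" using g unfolding Cs_def by auto
      have "g \<in> edges G" using gC Csub by blast
      then have "g \<in> EXg" unfolding EXg_char using gu fuR by blast
      then obtain e' where e': "e' \<in> edges X" "g = \<chi> e'" unfolding EXg_def by blast
      have e'e: "e' \<noteq> e" using e' g by blast
      have "f u \<in> ends G (\<chi> e')" using gu e'(2) by simp
      then have "f u \<in> f ` ends X e'" using ends_chi[OF e'(1)] by simp
      then obtain z where z: "z \<in> ends X e'" "f z = f u" by (metis imageE)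
      have "ends X e' \<subseteq> verts X" using wf_ends(2)[OF wfX e'(1)] .
      then have "z \<in> verts X" using z(1) by (rule subsetD)
      then have "z = u" using f_eq_inner[OF uin _ z(2)] by simp
      then have ue': "u \<in> ends X e'" using z by simp
      have "\<chi> e' \<in> C" using gC e'(2) by simp
      then have "\<chi> e' \<notin> T" using dec_parts(2) by blast
      then have "e' \<notin> TX" unfolding TX_def2 by simp
      then have e'R: "e' \<in> RX" unfolding RX_def using e' by simp
      have "e' \<in> comp_edges X RX u" by (rule edge_in_comp[OF wfX RX_sub e'R ue'])
      moreover have "comp_edges X RX u = comp_edges X RX w"
        using comp_edge_ends[OF wfX RX_sub eRX, of u w] u(1) by simp
      ultimately have "e' \<in> comp_edges X RX w" by simp
      then show ?thesis using e'e by blast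
    qed
    have B: "comp_edges X RX w = {e}" if eM: "\<chi> e \<in> M"
    proof (rule ccontr)
      assume ne: "comp_edges X RX w \<noteq> {e}"
      then obtain e' where e': "e' \<in> comp_edges X RX w" "e' \<noteq> e" using ecomp by blast
      have e'R: "e' \<in> RX" and e'ends: "ends X e' \<subseteq> comp_verts X RX w"
        using e'(1) unfolding comp_edges_def by auto
      have e'X: "e' \<in> edges X" using e'R RX_sub by blast
      have wne: "w \<notin> ends X e'" using oe[OF e'X] e'(2) by blast
      obtain e'' where e'': "e'' \<in> RX - {e}" "u \<in> ends X e''"
      proof (cases "u \<in> ends X e'")
        case True
        then show ?thesis using that e'R e'(2) by blast
      next
        case False
        obtain a b where ab: "ends X e' = {a, b}" using wf_ends_obtain[OF wfX e'X] by metis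
        then have aw: "a \<noteq> w" "a \<noteq> u" using wne False by auto
        have "a \<in> comp_verts X RX w" using e'ends ab by blast
        then have "conn X RX w a" unfolding comp_verts_def by simp
        then have "a \<in> {w, u} \<or> (\<exists>g \<in> RX - {out_edge X w}. u \<in> ends X g)"
          using out_conn_lemma[OF tX w _ RX_sub] u(1) unfolding e_def by blast
        then show ?thesis using aw that unfolding e_def by blast
      qed
      have e''X: "e'' \<in> edges X" using e'' RX_sub by blast
      have nT'': "\<chi> e'' \<notin> T" using e'' e''X unfolding RX_def TX_def2 by blast
      have ge'': "\<chi> e'' \<in> edges G" using e''X EXgsub unfolding EXg_def by blast
      have neq: "\<chi> e'' \<noteq> \<chi> e" using chiinj e''X eX e'' unfolding inj_on_def by blast
      have fu'': "f u \<in> ends G (\<chi> e'')" using ends_chi[OF e''X] e''(2) by simp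
      have "\<chi> e'' \<in> C \<or> \<chi> e'' \<in> M" using ge'' nT'' dec_parts(1) by blast
      then show False
      proof
        assume CM'': "\<chi> e'' \<in> M"
        have "{\<chi> e, \<chi> e''} \<subseteq> {g \<in> M. f u \<in> ends G g}" using CM'' eM fu'' endsG by auto
        then have "card {\<chi> e, \<chi> e''} \<le> card {g \<in> M. f u \<in> ends G g}"
          using finM by (intro card_mono) auto
        then have "2 \<le> degF G M (f u)" unfolding degF_def using neq by simp
        then show False using mt fuV by fastforce
      next
        assume C'': "\<chi> e'' \<in> C"
        define Cs where "Cs = {g \<in> C. f u \<in> ends G g}"
        define Es where "Es = {g \<in> edges G. f u \<in> ends G g}"
        have finCs: "finite Cs" unfolding Cs_def using finC by simp
        have finEs: "finite Es" unfolding Es_def using wfG unfolding wf_graph_def by simp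
        have "\<chi> e'' \<in> Cs" unfolding Cs_def using C'' fu'' by simp
        then have "card Cs \<noteq> 0" using finCs by auto
        moreover have "degF G C (f u) = 0 \<or> degF G C (f u) = 2" using tr fuV by blast
        ultimately have c2: "card Cs = 2" unfolding degF_def Cs_def by linarith
        have c3: "card Es = 3" using cub fuV unfolding cubic_def deg_def degF_def Es_def by blast
        have eCs: "\<chi> e \<notin> Cs" unfolding Cs_def using eM dec_parts(4) by blast
        have sub: "insert (\<chi> e) Cs \<subseteq> Es" unfolding Cs_def Es_def using ge endsG Csub by auto
        have "card (insert (\<chi> e) Cs) = 3" using c2 eCs finCs by simp
        then have EsEq: "insert (\<chi> e) Cs = Es" using card_subset_eq[OF finEs sub] c3 by simp
        have "conn G T (f u) (f w)" using dec_parts(5) fuV fwV unfolding spanning_tree_def by blast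
        then obtain g where g: "g \<in> T" "f u \<in> ends G g" using conn_leave fuw by metis
        then have "g \<in> Es" unfolding Es_def using Tsub by blast
        then have "g = \<chi> e \<or> g \<in> C" unfolding EsEq[symmetric] Cs_def by blast
        then show False using g(1) eM dec_parts(2,3) by blast
      qed
    qed
    show ?thesis
    proof (cases "\<chi> e \<in> C")
      case True
      then have "\<chi> e \<notin> M" using CMd by blast
      then show ?thesis using A[OF True] labdef True unfolding e_def by simp
    next
      case False
      then have "\<chi> e \<in> M" using CM by blast
      then show ?thesis using B labdef False unfolding e_def by simp
    qed
  qed
qed

lemma label_corr:
  assumes w: "w \<in> Out"
  shows "out_edge Y w \<in> CY \<longleftrightarrow> \<chi> (out_edge X w) \<in> C"
    and "out_edge Y w \<in> MY \<longleftrightarrow> \<chi> (out_edge X w) \<in> M"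
proof -
  have l: "label_of Y TY w = label_of X TX w" using lab w unfolding TX_def by blast
  show "out_edge Y w \<in> CY \<longleftrightarrow> \<chi> (out_edge X w) \<in> C"
    using label_Y(1)[OF w] label_X[OF w] l by simp
  show "out_edge Y w \<in> MY \<longleftrightarrow> \<chi> (out_edge X w) \<in> M"
    using label_Y(2)[OF w] label_X[OF w] l by simp
qed

end



context ctx25
begin

lemma em_Inl: "em w = Inl x \<longleftrightarrow> w \<in> Out \<and> f w = x"
  unfolding em_def by auto
lemma em_Inr: "em w = Inr y \<longleftrightarrow> w \<notin> Out \<and> w = y"
  unfolding em_def by auto

lemma finEY: "finite (edges Y)" using wfY unfolding wf_graph_def by simp

lemma deg_outside:
  assumes x: "x \<in> verts G - R" and Z: "Z \<subseteq> edges Y" and D: "D \<subseteq> edges G"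
    and corr: "\<forall>w \<in> Out. (out_edge Y w \<in> Z \<longleftrightarrow> \<chi> (out_edge X w) \<in> D)"
  shows "degF H (Inl ` (D - EXg) \<union> Inr ` Z) (Inl x) = degF G D x"
proof -
  define W where "W = {w \<in> Out. f w = x \<and> out_edge Y w \<in> Z}"
  define A1 where "A1 = {g \<in> D - EXg. x \<in> ends G g}"
  define A2 where "A2 = {e \<in> Z. Inl x \<in> em ` ends Y e}"
  define B2 where "B2 = {g \<in> D \<inter> EXg. x \<in> ends G g}"
  have finD: "finite D" using D finEG finite_subset by metis
  have finZ: "finite Z" using Z finEY finite_subset by metis
  have finA1: "finite A1" unfolding A1_def using finD by simp
  have finA2: "finite A2" unfolding A2_def using finZ by simp
  have finB2: "finite B2" unfolding B2_def using finD by simp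
  have L: "{g \<in> Inl ` (D - EXg) \<union> Inr ` Z. Inl x \<in> ends H g} = Inl ` A1 \<union> Inr ` A2"
  proof (rule set_eqI)
    fix g
    show "g \<in> {g \<in> Inl ` (D - EXg) \<union> Inr ` Z. Inl x \<in> ends H g} \<longleftrightarrow> g \<in> Inl ` A1 \<union> Inr ` A2"
    proof (cases g)
      case (Inl g0)
      have "Inl x \<in> ends H g \<longleftrightarrow> x \<in> ends G g0" unfolding Inl by (auto simp: H_ends_l)
      then show ?thesis unfolding Inl A1_def by auto
    next
      case (Inr e)
      show ?thesis unfolding Inr A2_def by (auto simp: H_ends_r)
    qed
  qed
  have "degF H (Inl ` (D - EXg) \<union> Inr ` Z) (Inl x) = card (Inl ` A1 \<union> Inr ` A2)"
    unfolding degF_def L by simp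
  also have "\<dots> = card A1 + card A2"
    using finA1 finA2 by (subst card_Un_disjoint) (auto simp: card_image)
  finally have lhs: "degF H (Inl ` (D - EXg) \<union> Inr ` Z) (Inl x) = card A1 + card A2" .
  have eqD: "{g \<in> D. x \<in> ends G g} = A1 \<union> B2" unfolding A1_def B2_def by auto
  have "A1 \<inter> B2 = {}" unfolding A1_def B2_def by auto
  then have rhs: "degF G D x = card A1 + card B2"
    unfolding degF_def eqD using finA1 finB2 card_Un_disjoint by metis
  have xR: "x \<notin> R" using x by simp
  have A2eq: "A2 = out_edge Y ` W"
  proof
    show "A2 \<subseteq> out_edge Y ` W"
    proof
      fix e assume e: "e \<in> A2"
      then have eZ: "e \<in> Z" and "Inl x \<in> em ` ends Y e" unfolding A2_def by auto
      then obtain w where w: "w \<in> ends Y e" "em w = Inl x" by (metis imageE)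
      then have wO: "w \<in> Out" "f w = x" using em_Inl by auto
      have eY: "e \<in> edges Y" using eZ Z by blast
      have "e = out_edge Y w" using out_edge_prop[OF tY wO(1)] eY w(1) by blast
      then have "w \<in> W" unfolding W_def using wO eZ by simp
      then show "e \<in> out_edge Y ` W" using \<open>e = out_edge Y w\<close> by simp
    qed
    show "out_edge Y ` W \<subseteq> A2"
    proof
      fix e assume "e \<in> out_edge Y ` W"
      then obtain w where w: "w \<in> W" "e = out_edge Y w" by (metis imageE)
      then have wO: "w \<in> Out" "f w = x" "out_edge Y w \<in> Z" unfolding W_def by auto
      have "w \<in> ends Y e" using out_edge_prop[OF tY wO(1)] w(2) by simp
      moreover have "em w = Inl x" using wO em_Inl by simp
      ultimately have "Inl x \<in> em ` ends Y e" by (metis imageI)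
      then show "e \<in> A2" unfolding A2_def using wO w by simp
    qed
  qed
  have injY: "inj_on (out_edge Y) W"
    using out_edge_inj[OF tY] unfolding W_def inj_on_def by blast
  have B2eq: "B2 = (\<lambda>w. \<chi> (out_edge X w)) ` W"
  proof
    show "B2 \<subseteq> (\<lambda>w. \<chi> (out_edge X w)) ` W"
    proof
      fix g assume g: "g \<in> B2"
      then have gD: "g \<in> D" and gE: "g \<in> EXg" and xg: "x \<in> ends G g" unfolding B2_def by auto
      obtain e where e: "e \<in> edges X" "g = \<chi> e" using gE unfolding EXg_def by (metis imageE)
      have "x \<in> f ` ends X e" using xg ends_chi[OF e(1)] e(2) by simp
      then obtain z where z: "z \<in> ends X e" "f z = x" by (metis imageE)
      have zV: "z \<in> verts X" using wf_ends(2)[OF wfX e(1)] z(1) by (rule subsetD)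
      have "z \<notin> inX" using z(2) xR unfolding R_def by auto
      then have zO: "z \<in> Out" using zV unfolding inX_def by simp
      have ez: "e = out_edge X z" using out_edge_prop[OF tX zO] e(1) z(1) by blast
      have "\<chi> (out_edge X z) \<in> D" using gD e(2) ez by simp
      then have "out_edge Y z \<in> Z" using corr zO by blast
      then have "z \<in> W" unfolding W_def using zO z(2) by simp
      moreover have "g = \<chi> (out_edge X z)" using e(2) ez by simp
      ultimately show "g \<in> (\<lambda>w. \<chi> (out_edge X w)) ` W" by (metis imageI)
    qed
    show "(\<lambda>w. \<chi> (out_edge X w)) ` W \<subseteq> B2"
    proof
      fix g assume "g \<in> (\<lambda>w. \<chi> (out_edge X w)) ` W"
      then obtain w where w: "w \<in> W" "g = \<chi> (out_edge X w)" by (metis imageE)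
      then have wO: "w \<in> Out" "f w = x" "out_edge Y w \<in> Z" unfolding W_def by auto
      have gD: "g \<in> D" using corr wO w(2) by blast
      have oe: "out_edge X w \<in> edges X" "w \<in> ends X (out_edge X w)" using out_edge_prop[OF tX wO(1)] by auto
      have gE: "g \<in> EXg" unfolding EXg_def w(2) using oe(1) by simp
      have "x \<in> ends G g" unfolding w(2) ends_chi[OF oe(1)] using oe(2) wO(2) by (metis imageI)
      then show "g \<in> B2" unfolding B2_def using gD gE by simp
    qed
  qed
  have injX: "inj_on (\<lambda>w. \<chi> (out_edge X w)) W"
  proof (rule inj_onI)
    fix w w' assume ww: "w \<in> W" "w' \<in> W" "\<chi> (out_edge X w) = \<chi> (out_edge X w')"
    then have wO: "w \<in> Out" "w' \<in> Out" unfolding W_def by auto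
    have "out_edge X w \<in> edges X" "out_edge X w' \<in> edges X"
      using out_edge_prop[OF tX wO(1)] out_edge_prop[OF tX wO(2)] by auto
    then have "out_edge X w = out_edge X w'" using chiinj ww(3) unfolding inj_on_def by blast
    then show "w = w'" using out_edge_inj[OF tX wO] by simp
  qed
  have "card A2 = card W" unfolding A2eq using injY by (simp add: card_image)
  moreover have "card B2 = card W" unfolding B2eq using injX by (simp add: card_image)
  ultimately show ?thesis using lhs rhs by simp
qed

lemma deg_inner:
  assumes y: "y \<in> inY" and Z: "Z \<subseteq> edges Y"
  shows "degF H (Inl ` D' \<union> Inr ` Z) (Inr y) = degF Y Z y"
proof -
  have yO: "y \<notin> Out" using y unfolding inY_def by simp
  have "{g \<in> Inl ` D' \<union> Inr ` Z. Inr y \<in> ends H g} = Inr ` {e \<in> Z. y \<in> ends Y e}"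
  proof (rule set_eqI)
    fix g
    show "g \<in> {g \<in> Inl ` D' \<union> Inr ` Z. Inr y \<in> ends H g} \<longleftrightarrow> g \<in> Inr ` {e \<in> Z. y \<in> ends Y e}"
    proof (cases g)
      case (Inl g0)
      then show ?thesis unfolding Inl by (auto simp: H_ends_l)
    next
      case (Inr e)
      have "Inr y \<in> em ` ends Y e \<longleftrightarrow> y \<in> ends Y e"
      proof
        assume "Inr y \<in> em ` ends Y e"
        then obtain w where "w \<in> ends Y e" "em w = Inr y" by (metis imageE)
        then show "y \<in> ends Y e" using em_Inr by auto
      next
        assume "y \<in> ends Y e"
        moreover have "em y = Inr y" using em_Inr yO by simp
        ultimately show "Inr y \<in> em ` ends Y e" by (metis imageI)
      qed
      then show ?thesis unfolding Inr by (auto simp: H_ends_r)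
    qed
  qed
  then show ?thesis unfolding degF_def by (simp add: card_image)
qed

lemma vertsH_cases:
  assumes "z \<in> verts H"
  obtains x where "z = Inl x" "x \<in> verts G - R" | y where "z = Inr y" "y \<in> inY"
  using assms unfolding H_verts by blast

lemma C'_tr: "two_regular H C'"
  unfolding two_regular_def
proof (intro conjI ballI)
  show "C' \<subseteq> edges H" unfolding C'_def H_edges using Csub CY_sub RY_sub by auto
  fix z assume z: "z \<in> verts H"
  then show "degF H C' z = 0 \<or> degF H C' z = 2"
  proof (cases rule: vertsH_cases)
    case (1 x)
    have "degF H C' z = degF G C x" unfolding 1 C'_def
      by (rule deg_outside[OF 1(2)]) (use CY_sub RY_sub Csub label_corr(1) in auto)
    then show ?thesis using dec_parts(6) 1(2) unfolding two_regular_def by simp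
  next
    case (2 y)
    have "degF H C' z = degF Y CY y" unfolding 2 C'_def
      by (rule deg_inner[OF 2(2)]) (use CY_sub RY_sub in auto)
    then show ?thesis using degCY[OF 2(2)] by simp
  qed
qed

lemma M'_mt: "matching H M'"
  unfolding matching_def
proof (intro conjI ballI)
  show "M' \<subseteq> edges H" unfolding M'_def H_edges using Msub MY_sub RY_sub by auto
  fix z assume z: "z \<in> verts H"
  then show "degF H M' z \<le> 1"
  proof (cases rule: vertsH_cases)
    case (1 x)
    have "degF H M' z = degF G M x" unfolding 1 M'_def
      by (rule deg_outside[OF 1(2)]) (use MY_sub RY_sub Msub label_corr(2) in auto)
    then show ?thesis using dec_parts(7) 1(2) unfolding matching_def by simp
  next
    case (2 y)
    have "degF H M' z = degF Y MY y" unfolding 2 M'_def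
      by (rule deg_inner[OF 2(2)]) (use MY_sub RY_sub in auto)
    then show ?thesis using degMY[OF 2(2)] by simp
  qed
qed

lemma partition_H: "T' \<union> C' \<union> M' = edges H" "T' \<inter> C' = {}" "T' \<inter> M' = {}" "C' \<inter> M' = {}"
proof -
  have l: "Fo \<union> (C - EXg) \<union> (M - EXg) = edges G - EXg" unfolding Fo_def using dec_parts(1) by blast
  have r: "TY \<union> CY \<union> MY = edges Y" using CY_MY(1) TY_sub unfolding RY_def by blast
  show "T' \<union> C' \<union> M' = edges H" unfolding T'_def C'_def M'_def H_edges
    using l r by blast
  show "T' \<inter> C' = {}" unfolding T'_def C'_def Fo_def using dec_parts(2) CY_sub unfolding RY_def by blast
  show "T' \<inter> M' = {}" unfolding T'_def M'_def Fo_def using dec_parts(3) MY_sub unfolding RY_def by blast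
  show "C' \<inter> M' = {}" unfolding C'_def M'_def using dec_parts(4) CY_MY(2) by blast
qed

end



context ctx25
begin

lemma T'_sub: "T' \<subseteq> edges H"
  unfolding T'_def H_edges Fo_def using Tsub TY_sub by auto

lemma connY_H: assumes "conn Y TY a b" shows "conn H T' (em a) (em b)"
  using assms unfolding conn_def[of Y]
proof (induction rule: rtranclp_induct)
  case base then show ?case by simp
next
  case (step y z)
  from step.hyps(2) obtain g where g: "g \<in> TY" "ends Y g = {y, z}" by blast
  have "Inr g \<in> T'" unfolding T'_def using g by simp
  moreover have "ends H (Inr g) = {em y, em z}" unfolding H_ends_r g(2) by simp
  ultimately have "conn H T' (em y) (em z)" by (rule conn_edge)
  then show ?case using step.IH conn_trans by metis
qed

lemma tcX_out: "v \<in> verts X \<Longrightarrow> \<exists>u \<in> Out. conn X TX v u"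
  using tcX unfolding three_consistent_def TX_def by blast

lemma tcY_out: "v \<in> verts Y \<Longrightarrow> \<exists>u \<in> Out. conn Y TY v u"
  using tcY unfolding three_consistent_def by blast

definition Lm :: "'v \<Rightarrow> 'v + 'w" where "Lm z = (if z \<in> R then Inl (f (SOME w. w \<in> Out \<and> conn X TX (inv_into inX f z) w)) else Inl z)"

lemma Lm_out: "z \<notin> R \<Longrightarrow> Lm z = Inl z" unfolding Lm_def by simp

lemma Lf: assumes v: "v \<in> verts X" shows "\<exists>w \<in> Out. conn X TX v w \<and> Lm (f v) = Inl (f w)"
proof (cases "v \<in> Out")
  case True
  then have "f v \<notin> R" using fOut by blast
  then have "Lm (f v) = Inl (f v)" by (rule Lm_out)
  then show ?thesis using True by (intro bexI[of _ v]) auto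
next
  case False
  then have vin: "v \<in> inX" unfolding inX_def using v by simp
  then have fvR: "f v \<in> R" unfolding R_def by simp
  have inv: "inv_into inX f (f v) = v" using inv_into_f_f[OF finj vin] .
  have ex: "\<exists>w. w \<in> Out \<and> conn X TX v w" using tcX_out[OF v] by blast
  define w where "w = (SOME w. w \<in> Out \<and> conn X TX v w)"
  have w: "w \<in> Out \<and> conn X TX v w" unfolding w_def using someI_ex[OF ex] .
  have "Lm (f v) = Inl (f w)" unfolding Lm_def w_def using fvR inv by simp
  then show ?thesis using w by blast
qed

lemma connG_H: assumes "conn G T a b" shows "conn H T' (Lm a) (Lm b)"
  using assms unfolding conn_def[of G]
proof (induction rule: rtranclp_induct)
  case base then show ?case by simp
next
  case (step y z)
  from step.hyps(2) obtain g where g: "g \<in> T" "ends G g = {y, z}" by blast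
  have "conn H T' (Lm y) (Lm z)"
  proof (cases "g \<in> EXg")
    case False
    then have gF: "g \<in> Fo" unfolding Fo_def using g by simp
    have "ends G g \<inter> R = {}" using outside_edge False g Tsub by blast
    then have "y \<notin> R" "z \<notin> R" using g(2) by auto
    then have "Lm y = Inl y" "Lm z = Inl z" using Lm_out by auto
    moreover have "Inl g \<in> T'" unfolding T'_def using gF by simp
    moreover have "ends H (Inl g) = {Inl y, Inl z}" unfolding H_ends_l g(2) by simp
    ultimately show ?thesis using conn_edge by metis
  next
    case True
    then obtain e where e: "e \<in> edges X" "g = \<chi> e" unfolding EXg_def by (metis imageE)
    have eT: "e \<in> TX" unfolding TX_def2 using e g by simp
    have fe: "f ` ends X e = {y, z}" using ends_chi[OF e(1)] e(2) g(2) by simp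
    have "y \<in> f ` ends X e" using fe by simp
    then obtain p where p: "p \<in> ends X e" "f p = y" by (metis imageE)
    have "z \<in> f ` ends X e" using fe by simp
    then obtain q where q: "q \<in> ends X e" "f q = z" by (metis imageE)
    have pV: "p \<in> verts X" and qV: "q \<in> verts X"
      using wf_ends(2)[OF wfX e(1)] p(1) q(1) by auto
    obtain wp where wp: "wp \<in> Out" "conn X TX p wp" "Lm (f p) = Inl (f wp)" using Lf[OF pV] by blast
    obtain wq where wq: "wq \<in> Out" "conn X TX q wq" "Lm (f q) = Inl (f wq)" using Lf[OF qV] by blast
    have "conn X TX p q" using conn_edge2[OF eT wf_ends(1)[OF wfX e(1)] p(1) q(1)] .
    then have "conn X TX wp wq" using wp(2) wq(2) conn_sym conn_trans by metis
    then have "conn Y TY wp wq" using cn wp(1) wq(1) unfolding TX_def by blast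
    then have "conn H T' (em wp) (em wq)" by (rule connY_H)
    moreover have "em wp = Inl (f wp)" "em wq = Inl (f wq)" using wp(1) wq(1) em_Inl by auto
    ultimately have c: "conn H T' (Inl (f wp)) (Inl (f wq))" by simp
    have "Lm y = Inl (f wp)" using wp(3) p(2) by simp
    moreover have "Lm z = Inl (f wq)" using wq(3) q(2) by simp
    ultimately show ?thesis using c by simp
  qed
  then show ?case using step.IH conn_trans by metis
qed

lemma H_to_outside: assumes z: "z \<in> verts H" shows "\<exists>x \<in> verts G - R. conn H T' z (Inl x)"
  using z
proof (cases rule: vertsH_cases)
  case (1 x) then show ?thesis by (intro bexI[of _ x]) auto
next
  case (2 y)
  then have yV: "y \<in> verts Y" and yO: "y \<notin> Out" unfolding inY_def by auto
  obtain w where w: "w \<in> Out" "conn Y TY y w" using tcY_out[OF yV] by blast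
  have "conn H T' (em y) (em w)" by (rule connY_H[OF w(2)])
  moreover have "em y = Inr y" using yO em_Inr by simp
  moreover have "em w = Inl (f w)" using w(1) em_Inl by simp
  ultimately have "conn H T' z (Inl (f w))" using 2 by simp
  moreover have "f w \<in> verts G - R" using fOut[OF w(1)] by simp
  ultimately show ?thesis by blast
qed

lemma H_conn: assumes "z1 \<in> verts H" "z2 \<in> verts H" shows "conn H T' z1 z2"
proof -
  obtain x1 where x1: "x1 \<in> verts G - R" "conn H T' z1 (Inl x1)" using H_to_outside[OF assms(1)] by blast
  obtain x2 where x2: "x2 \<in> verts G - R" "conn H T' z2 (Inl x2)" using H_to_outside[OF assms(2)] by blast
  have "conn G T x1 x2" using dec_parts(5) x1(1) x2(1) unfolding spanning_tree_def by blast
  then have "conn H T' (Lm x1) (Lm x2)" by (rule connG_H)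
  moreover have "Lm x1 = Inl x1" using x1(1) by (intro Lm_out) simp
  moreover have "Lm x2 = Inl x2" using x2(1) by (intro Lm_out) simp
  ultimately have "conn H T' (Inl x1) (Inl x2)" by simp
  then show ?thesis using x1(2) x2(2) conn_sym conn_trans by metis
qed

end



lemma ncomp_conn:
  assumes "\<forall>x \<in> verts Z. \<forall>y \<in> verts Z. conn Z F x y"
  shows "ncomp Z F = (if verts Z = {} then 0 else 1)"
proof (cases "verts Z = {}")
  case True then show ?thesis unfolding ncomp_def by simp
next
  case False
  have "\<And>v. v \<in> verts Z \<Longrightarrow> comp_verts Z F v = verts Z" unfolding comp_verts_def using assms by blast
  then have "comp_verts Z F ` verts Z = {verts Z}" using False by auto
  then show ?thesis unfolding ncomp_def using False by simp
qed

lemma card_image_kernel: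
  assumes "\<forall>x \<in> A. \<forall>y \<in> A. g x = g y \<longleftrightarrow> h x = h y"
  shows "card (g ` A) = card (h ` A)"
proof -
  define \<phi> where "\<phi> z = h (inv_into A g z)" for z
  have phi: "\<And>a. a \<in> A \<Longrightarrow> \<phi> (g a) = h a"
  proof -
    fix a assume a: "a \<in> A"
    have "inv_into A g (g a) \<in> A" "g (inv_into A g (g a)) = g a"
      using a by (auto intro: inv_into_into f_inv_into_f)
    then show "\<phi> (g a) = h a" unfolding \<phi>_def using assms a by blast
  qed
  have "\<phi> ` (g ` A) = h ` A"
  proof
    show "\<phi> ` g ` A \<subseteq> h ` A" using phi by auto
    show "h ` A \<subseteq> \<phi> ` g ` A"
    proof
      fix z assume "z \<in> h ` A"
      then obtain a where a: "a \<in> A" "z = h a" by (metis imageE)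
      then have "z = \<phi> (g a)" using phi by simp
      then show "z \<in> \<phi> ` g ` A" using a(1) by (metis imageI)
    qed
  qed
  moreover have "inj_on \<phi> (g ` A)"
  proof (rule inj_onI)
    fix z1 z2 assume z: "z1 \<in> g ` A" "z2 \<in> g ` A" "\<phi> z1 = \<phi> z2"
    obtain a1 where a1: "a1 \<in> A" "z1 = g a1" using z(1) by (metis imageE)
    obtain a2 where a2: "a2 \<in> A" "z2 = g a2" using z(2) by (metis imageE)
    have "h a1 = h a2" using z(3) phi a1 a2 by simp
    then show "z1 = z2" using assms a1 a2 by blast
  qed
  ultimately show ?thesis using card_image by metis
qed

lemma ncomp_out:
  assumes "Out \<subseteq> verts Z" and "\<forall>v \<in> verts Z. \<exists>u \<in> Out. conn Z F v u"
  shows "ncomp Z F = card (comp_verts Z F ` Out)"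
proof -
  have "comp_verts Z F ` verts Z = comp_verts Z F ` Out"
  proof
    show "comp_verts Z F ` verts Z \<subseteq> comp_verts Z F ` Out"
    proof
      fix K assume "K \<in> comp_verts Z F ` verts Z"
      then obtain v where v: "v \<in> verts Z" "K = comp_verts Z F v" by (metis imageE)
      then obtain u where u: "u \<in> Out" "conn Z F v u" using assms(2) by blast
      then have "K = comp_verts Z F u" using v comp_verts_eq by metis
      then show "K \<in> comp_verts Z F ` Out" using u(1) by (metis imageI)
    qed
    show "comp_verts Z F ` Out \<subseteq> comp_verts Z F ` verts Z" using assms(1) by (rule image_mono)
  qed
  then show ?thesis unfolding ncomp_def by simp
qed

lemma comp_eq_iff:
  assumes "w \<in> verts Z" "w' \<in> verts Z"
  shows "comp_verts Z F w = comp_verts Z F w' \<longleftrightarrow> conn Z F w w'"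
proof
  assume eq: "comp_verts Z F w = comp_verts Z F w'"
  have "w' \<in> comp_verts Z F w'" using comp_self[OF assms(2)] .
  then have "w' \<in> comp_verts Z F w" unfolding eq .
  then show "conn Z F w w'" unfolding comp_verts_def by simp
qed (rule comp_verts_eq)

context ctx25
begin

lemma nXY: "ncomp X TX = ncomp Y TY"
proof -
  have hX: "\<forall>v \<in> verts X. \<exists>u \<in> Out. conn X TX v u" using tcX_out by blast
  have hY: "\<forall>v \<in> verts Y. \<exists>u \<in> Out. conn Y TY v u" using tcY_out by blast
  have "ncomp X TX = card (comp_verts X TX ` Out)" by (rule ncomp_out[OF OutX hX])
  moreover have "ncomp Y TY = card (comp_verts Y TY ` Out)" by (rule ncomp_out[OF OutY hY])
  moreover have "card (comp_verts X TX ` Out) = card (comp_verts Y TY ` Out)"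
  proof (rule card_image_kernel, intro ballI)
    fix w w' assume w: "w \<in> Out" "w' \<in> Out"
    have wX: "w \<in> verts X" "w' \<in> verts X" using w OutX by (auto simp: subset_iff)
    have wY: "w \<in> verts Y" "w' \<in> verts Y" using w OutY by (auto simp: subset_iff)
    have "comp_verts X TX w = comp_verts X TX w' \<longleftrightarrow> conn X TX w w'"
      by (rule comp_eq_iff[OF wX])
    moreover have "comp_verts Y TY w = comp_verts Y TY w' \<longleftrightarrow> conn Y TY w w'"
      by (rule comp_eq_iff[OF wY])
    moreover have "conn X TX w w' \<longleftrightarrow> conn Y TY w w'" using cn w unfolding TX_def by blast
    ultimately show "comp_verts X TX w = comp_verts X TX w' \<longleftrightarrow> comp_verts Y TY w = comp_verts Y TY w'"
      by simp
  qed
  ultimately show ?thesis by simp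
qed

lemma empty_iff: "verts G = {} \<longleftrightarrow> verts H = {}"
proof
  assume G0: "verts G = {}"
  then have "Out = {}" using fOut by blast
  then have "verts Y = {}" using tcY_out by blast
  then have "inY = {}" unfolding inY_def by simp
  then show "verts H = {}" unfolding H_verts using G0 by simp
next
  assume H0: "verts H = {}"
  then have a: "verts G - R = {}" and "inY = {}" unfolding H_verts by auto
  then have "Out = {}" using fOut by blast
  then have "verts X = {}" using tcX_out by blast
  then have "R = {}" unfolding R_def inX_def by simp
  then show "verts G = {}" using a by simp
qed

lemma nGH: "ncomp G T = ncomp H T'"
proof -
  have "ncomp G T = (if verts G = {} then 0 else 1)"
    using dec_parts(5) unfolding spanning_tree_def by (intro ncomp_conn) blast
  moreover have "ncomp H T' = (if verts H = {} then 0 else 1)"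
    using H_conn by (intro ncomp_conn) blast
  ultimately show ?thesis using empty_iff by simp
qed

lemma T_split: "T = Fo \<union> \<chi> ` TX" "Fo \<inter> \<chi> ` TX = {}"
proof -
  have "T \<inter> EXg = \<chi> ` TX"
  proof
    show "T \<inter> EXg \<subseteq> \<chi> ` TX"
    proof
      fix g assume g: "g \<in> T \<inter> EXg"
      then obtain e where e: "e \<in> edges X" "g = \<chi> e" unfolding EXg_def by (metis IntD2 imageE)
      then have "e \<in> TX" unfolding TX_def2 using g by simp
      then show "g \<in> \<chi> ` TX" using e(2) by (metis imageI)
    qed
    show "\<chi> ` TX \<subseteq> T \<inter> EXg" unfolding TX_def2 EXg_def by auto
  qed
  then show "T = Fo \<union> \<chi> ` TX" "Fo \<inter> \<chi> ` TX = {}" unfolding Fo_def by auto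
qed

lemma count_H: "ncomp H T' + card T' = card (verts H)"
proof -
  have acyT: "acyclic_edges G T" using dec_parts(5) unfolding spanning_tree_def by simp
  have cG: "ncomp G T + card T = card (verts G)" by (rule forest_count[OF wfG Tsub acyT])
  have acyX: "acyclic_edges X TX" using tcX unfolding three_consistent_def TX_def by simp
  have cX: "ncomp X TX + card TX = card (verts X)" by (rule forest_count[OF wfX TX_sub acyX])
  have acyY: "acyclic_edges Y TY" using tcY unfolding three_consistent_def by simp
  have cY: "ncomp Y TY + card TY = card (verts Y)" by (rule forest_count[OF wfY TY_sub acyY])
  have finVX: "finite (verts X)" using wfX unfolding wf_graph_def by simp
  have finVY: "finite (verts Y)" using wfY unfolding wf_graph_def by simp
  have finVG: "finite (verts G)" using wfG unfolding wf_graph_def by simp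
  have vX: "card (verts X) = card inX + card Out"
  proof -
    have "verts X = inX \<union> Out" "inX \<inter> Out = {}" unfolding inX_def using OutX by auto
    then show ?thesis using finVX card_Un_disjoint by (metis finite_Un)
  qed
  have vY: "card (verts Y) = card inY + card Out"
  proof -
    have "verts Y = inY \<union> Out" "inY \<inter> Out = {}" unfolding inY_def using OutY by auto
    then show ?thesis using finVY card_Un_disjoint by (metis finite_Un)
  qed
  have cR: "card R = card inX" unfolding R_def using finj by (rule card_image)
  have vG: "card (verts G) = card R + card (verts G - R)"
    using Rsub finVG by (metis card_Diff_subset card_mono add_diff_inverse_nat not_less finite_subset)
  have vH: "card (verts H) = card (verts G - R) + card inY"
  proof -
    have "card (Inl ` (verts G - R) :: ('v + 'w) set) = card (verts G - R)" by (simp add: card_image)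
    moreover have "card (Inr ` inY :: ('v + 'w) set) = card inY" by (simp add: card_image)
    moreover have "finite (verts G - R)" "finite inY" using finVG finVY unfolding inY_def by auto
    ultimately show ?thesis unfolding H_verts by (subst card_Un_disjoint) auto
  qed
  have finFo: "finite Fo" unfolding Fo_def using finT by simp
  have finTX: "finite TX" using TX_sub wfX unfolding wf_graph_def by (meson finite_subset)
  have finTY: "finite TY" using TY_sub finEY by (meson finite_subset)
  have eT: "card T = card Fo + card TX"
  proof -
    have "card (\<chi> ` TX) = card TX" using chiinj TX_sub by (meson card_image inj_on_subset)
    moreover have "finite (\<chi> ` TX)" using finTX by simp
    ultimately show ?thesis using T_split finFo card_Un_disjoint by metis
  qed
  have eT': "card T' = card Fo + card TY"
  proof -
    have "card (Inl ` Fo :: ('e + 'y) set) = card Fo" by (simp add: card_image)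
    moreover have "card (Inr ` TY :: ('e + 'y) set) = card TY" by (simp add: card_image)
    ultimately show ?thesis unfolding T'_def using finFo finTY by (subst card_Un_disjoint) auto
  qed
  show ?thesis using cG cX cY vX vY cR vG vH eT eT' nXY nGH by linarith
qed

lemma T'_tree: "spanning_tree H T'"
proof -
  have "acyclic_edges H T'" by (rule count_tree[OF wfH T'_sub count_H])
  moreover have "\<forall>x \<in> verts H. \<forall>y \<in> verts H. conn H T' x y" using H_conn by simp
  ultimately show ?thesis unfolding spanning_tree_def using T'_sub by simp
qed

lemma result: "three_decomp H T' C' M'"
  unfolding three_decomp_def using partition_H T'_tree C'_tr M'_mt by simp

end

theorem lemma25:
  fixes X :: "('w, 'x) mgraph" and Y :: "('w, 'y) mgraph" and Out :: "'w set"
    and G :: "('v, 'e) mgraph" and f :: "'w \<Rightarrow> 'v" and \<chi> :: "'x \<Rightarrow> 'e"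
    and T C M :: "'e set"
  assumes "template X Out" and "template Y Out"
    and "cubic G"
    and "embedding G X Out f \<chi>"
    and "three_decomp G T C M"
    and "naively_extendable X Y Out (restrict_to X \<chi> T)"
  shows "\<exists>T' C' M'. three_decomp (transform G X Y Out f \<chi>) T' C' M'"
proof -
  obtain TY where TY: "three_consistent Y Out TY"
    "\<forall>v \<in> Out. label_of Y TY v = label_of X (restrict_to X \<chi> T) v"
    "\<forall>v \<in> Out. \<forall>w \<in> Out. conn X (restrict_to X \<chi> T) v w \<longleftrightarrow> conn Y TY v w"
    and tcX: "three_consistent X Out (restrict_to X \<chi> T)"
    using assms(6) unfolding naively_extendable_def by blast
  interpret c: ctx25 X Y Out G f \<chi> T C M TY
    using assms(1-5) tcX TY by unfold_locales
  have "three_decomp (transform G X Y Out f \<chi>) c.T' c.C' c.M'" using c.result unfolding c.H_def .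
  then show ?thesis by (intro exI)
qed


end
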